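(* Let $\Bbbk$ be a field, $\mathrm{Var}$ a variety of $\Bbbk$-algebras with one binary product defined by polylinear identities, $X$ a set, $\dot X$ a disjoint copy of $X$, $F=\mathrm{Var}\langle X\cup\dot X\rangle$, and $\varphi:F\to F$ the algebra homomorphism with $\varphi(x)=\varphi(\dot x)=x$ ($x\in X$). (1) Let $V\subseteq F$ be the span of all monomials of positive degree in $\dot X$, identified with $\text{tri-}\mathrm{Var}\langle X\rangle$ (operations $f\vdash g=\varphi(f)g$, $f\dashv g=f\varphi(g)$, $f\perp g=fg$, $\dot x\leftrightarrow x$). Let $S\subseteq V$ and $I=(S\cup\varphi(S))$ the ideal of $F$ generated by $S\cup\varphi(S)$. Then $I$ is $\varphi$-invariant, so $\varphi$ induces an endomorphism $\bar\varphi$ of $F/I$, and $F/I$ becomes a tri-algebra $(F/I)^{(3)}$ via $a\vdash b=\bar\varphi(a)b$, $a\dashv b=a\bar\varphi(b)$, $a\perp b=ab$; the tri-algebra $\text{tri-}\mathrm{Var}\langle X\mid S\rangle$ is isomorphic to the subalgebra of $(F/I)^{(3)}$ generated by the image of $\dot X$. (2) Similarly, let $V_2\subseteq F$ be the span of monomials of degree exactly $1$ in $\dot X$, identified with $\text{di-}\mathrm{Var}\langle X\rangle$ (operations $f\vdash g=\varphi(f)g$, $f\dashv g=f\varphi(g)$, $\dot x\leftrightarrow x$). For $S\subseteq V_2$ and $I=(S\cup\varphi(S))$, the di-algebra $\text{di-}\mathrm{Var}\langle X\mid S\rangle$ is isomorphic to the subalgebra of $F/I$ with operations $a\vdash b=\bar\varphi(a)b$,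 $a\dashv b=a\bar\varphi(b)$ generated by the image of $\dot X$.
   Context: Replication: for a polylinear $\Phi(x_1,\dots,x_n)$ in the free algebra with one binary operation $\mu$ and nonempty $H\subseteq\{1,\dots,n\}$, $\Phi_H$ is obtained by viewing each monomial as a binary tree, marking leaves $x_i$, $i\in H$, and replacing $\mu$ at each node by $\mu_S$, $S\subseteq\{1,2\}$ the set of branches containing a marked leaf (by $\mu_{\{1\}}$ if $S=\varnothing$). Write $\dashv=\mu_{\{1\}}$, $\vdash=\mu_{\{2\}}$, $\perp=\mu_{\{1,2\}}$. $\text{tri-}\mathrm{Var}$ is the variety of algebras with operations $\vdash,\dashv,\perp$ satisfying $(a* b)\vdash c=(a\star b)\vdash c$, $a\dashv(b* c)=a\dashv(b\star c)$ for all $*,\star\in\{\vdash,\dashv,\perp\}$, and $\Phi_H=0$ for every defining identity $\Phi$ of $\mathrm{Var}$ and nonempty $H$. $\text{di-}\mathrm{Var}$ is the variety of algebras with operations $\vdash,\dashv$ satisfying $(a\dashv b)\vdash c=(a\vdash b)\vdash c$, $a\dashv(b\vdash c)=a\dashv(b\dashv c)$, and $\Phi_{\{i\}}=0$ for every defining identity $\Phi$ of $\mathrm{Var}$ of degree $n$ and $1\le i\le n$. $\text{tri-}\mathrm{Var}\langle X\mid S\rangle$ (resp. $\text{di-}\mathrm{Var}\langle X\mid S\rangle$) denotes the quotient of the free tri- (resp. di-) algebra on $X$ by the ideal generated by $S$. The identifications of $V$ and $V_2$ with the free tri- and di-algebras on $X$ are established in the paper. *)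

theory Defs
  imports Main
begin

text \<open>Nonassociative monomials: binary trees with labelled leaves.\<close>
datatype 'a btree = Leaf 'a | Node "'a btree" "'a btree"

fun leaves :: "'a btree \<Rightarrow> 'a list" where
  "leaves (Leaf a) = [a]"
| "leaves (Node l r) = leaves l @ leaves r"

text \<open>Elements of the magma algebra k{Y}: finitely supported coefficient functions
  on monomials.  For generators Y = X \<union> dotX we use the labels Inl x (for x) and
  Inr x (for the dotted copy of x), x \<in> X.\<close>

definition Melt :: "'x set \<Rightarrow> (('x + 'x) btree \<Rightarrow> 'k::field) \<Rightarrow> bool" where
  "Melt X f \<longleftrightarrow> finite {t. f t \<noteq> 0} \<and>
     (\<forall>t. f t \<noteq> 0 \<longrightarrow> set_btree t \<subseteq> Inl ` X \<union> Inr ` X)"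

definition mzero :: "'a btree \<Rightarrow> 'k::field" where "mzero = (\<lambda>t. 0)"
definition madd :: "('a btree \<Rightarrow> 'k::field) \<Rightarrow> ('a btree \<Rightarrow> 'k) \<Rightarrow> ('a btree \<Rightarrow> 'k)" where
  "madd f g = (\<lambda>t. f t + g t)"
definition msub :: "('a btree \<Rightarrow> 'k::field) \<Rightarrow> ('a btree \<Rightarrow> 'k) \<Rightarrow> ('a btree \<Rightarrow> 'k)" where
  "msub f g = (\<lambda>t. f t - g t)"
definition msc :: "'k::field \<Rightarrow> ('a btree \<Rightarrow> 'k) \<Rightarrow> ('a btree \<Rightarrow> 'k)" where
  "msc c f = (\<lambda>t. c * f t)"
definition mmul :: "('a btree \<Rightarrow> 'k::field) \<Rightarrow> ('a btree \<Rightarrow> 'k) \<Rightarrow> ('a btree \<Rightarrow> 'k)" where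
  "mmul f g = (\<lambda>t. case t of Leaf _ \<Rightarrow> 0 | Node a b \<Rightarrow> f a * g b)"
definition mono :: "'a btree \<Rightarrow> ('a btree \<Rightarrow> 'k::field)" where
  "mono t = (\<lambda>s. if s = t then 1 else 0)"

text \<open>A (nonassociative) polynomial in variables x_1, x_2, ... (labelled by nat).\<close>
definition polylinear :: "(nat btree \<Rightarrow> 'k::field) \<Rightarrow> bool" where
  "polylinear \<Phi> \<longleftrightarrow> finite {t. \<Phi> t \<noteq> 0} \<and>
     (\<exists>n. \<forall>t. \<Phi> t \<noteq> 0 \<longrightarrow> distinct (leaves t) \<and> set (leaves t) = {1..n})"

fun eval_mono :: "(nat \<Rightarrow> ('a btree \<Rightarrow> 'k::field)) \<Rightarrow> nat btree \<Rightarrow> ('a btree \<Rightarrow> 'k)" where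
  "eval_mono u (Leaf i) = u i"
| "eval_mono u (Node a b) = mmul (eval_mono u a) (eval_mono u b)"

definition eval_poly :: "(nat btree \<Rightarrow> 'k::field) \<Rightarrow> (nat \<Rightarrow> ('a btree \<Rightarrow> 'k)) \<Rightarrow> ('a btree \<Rightarrow> 'k)" where
  "eval_poly \<Phi> u = (\<lambda>s. \<Sum>t\<in>{t. \<Phi> t \<noteq> 0}. \<Phi> t * eval_mono u t s)"

inductive_set ideal_gen :: "'x set \<Rightarrow> (('x + 'x) btree \<Rightarrow> 'k::field) set \<Rightarrow> (('x + 'x) btree \<Rightarrow> 'k) set"
  for X G where
  gen: "g \<in> G \<Longrightarrow> g \<in> ideal_gen X G"
| zero: "mzero \<in> ideal_gen X G"
| add: "a \<in> ideal_gen X G \<Longrightarrow> b \<in> ideal_gen X G \<Longrightarrow> madd a b \<in> ideal_gen X G"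
| smult: "a \<in> ideal_gen X G \<Longrightarrow> msc c a \<in> ideal_gen X G"
| mulr: "a \<in> ideal_gen X G \<Longrightarrow> Melt X m \<Longrightarrow> mmul a m \<in> ideal_gen X G"
| mull: "a \<in> ideal_gen X G \<Longrightarrow> Melt X m \<Longrightarrow> mmul m a \<in> ideal_gen X G"

text \<open>The verbal (T-)ideal of k{X \<union> dotX} of the variety defined by the identities Ids;
  Var<X \<union> dotX> = k{X \<union> dotX} / Tideal X Ids.\<close>
definition Tideal :: "'x set \<Rightarrow> (nat btree \<Rightarrow> 'k::field) set \<Rightarrow> (('x + 'x) btree \<Rightarrow> 'k) set" where
  "Tideal X Ids = ideal_gen X {eval_poly \<Phi> u | \<Phi> u. \<Phi> \<in> Ids \<and> (\<forall>i. Melt X (u i))}"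

inductive_set subalg_gen :: "('a btree \<Rightarrow> 'k::field) set \<Rightarrow> (('a btree \<Rightarrow> 'k) \<Rightarrow> ('a btree \<Rightarrow> 'k) \<Rightarrow> ('a btree \<Rightarrow> 'k)) list \<Rightarrow> ('a btree \<Rightarrow> 'k) set"
  for G ops where
  gen: "g \<in> G \<Longrightarrow> g \<in> subalg_gen G ops"
| zero: "mzero \<in> subalg_gen G ops"
| add: "a \<in> subalg_gen G ops \<Longrightarrow> b \<in> subalg_gen G ops \<Longrightarrow> madd a b \<in> subalg_gen G ops"
| smult: "a \<in> subalg_gen G ops \<Longrightarrow> msc c a \<in> subalg_gen G ops"
| op: "p \<in> set ops \<Longrightarrow> a \<in> subalg_gen G ops \<Longrightarrow> b \<in> subalg_gen G ops \<Longrightarrow> p a b \<in> subalg_gen G ops"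

abbreviation lin_span where "lin_span G \<equiv> subalg_gen G []"

inductive_set relideal_gen :: "('a btree \<Rightarrow> 'k::field) set \<Rightarrow> ('a btree \<Rightarrow> 'k) set \<Rightarrow> (('a btree \<Rightarrow> 'k) \<Rightarrow> ('a btree \<Rightarrow> 'k) \<Rightarrow> ('a btree \<Rightarrow> 'k)) list \<Rightarrow> ('a btree \<Rightarrow> 'k) set"
  for W G ops where
  gen: "g \<in> G \<Longrightarrow> g \<in> relideal_gen W G ops"
| zero: "mzero \<in> relideal_gen W G ops"
| add: "a \<in> relideal_gen W G ops \<Longrightarrow> b \<in> relideal_gen W G ops \<Longrightarrow> madd a b \<in> relideal_gen W G ops"
| smult: "a \<in> relideal_gen W G ops \<Longrightarrow> msc c a \<in> relideal_gen W G ops"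
| opr: "p \<in> set ops \<Longrightarrow> a \<in> relideal_gen W G ops \<Longrightarrow> w \<in> W \<Longrightarrow> p a w \<in> relideal_gen W G ops"
| opl: "p \<in> set ops \<Longrightarrow> a \<in> relideal_gen W G ops \<Longrightarrow> w \<in> W \<Longrightarrow> p w a \<in> relideal_gen W G ops"

text \<open>W1/K1 and W2/K2 (K_i a subspace/ideal of W_i) are isomorphic as algebras
  with the corresponding operations ops1 ! i, ops2 ! i, expressed through a lift
  h : W1 \<rightarrow> W2 of the isomorphism: h is linear and multiplicative modulo K2,
  induces a surjection onto W2/K2, and its kernel modulo K2 is exactly K1.\<close>
definition quot_iso ::
  "('a btree \<Rightarrow> 'k::field) set \<Rightarrow> ('a btree \<Rightarrow> 'k) set \<Rightarrow> (('a btree \<Rightarrow> 'k) \<Rightarrow> ('a btree \<Rightarrow> 'k) \<Rightarrow> ('a btree \<Rightarrow> 'k)) list \<Rightarrow>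
   ('b btree \<Rightarrow> 'k) set \<Rightarrow> ('b btree \<Rightarrow> 'k) set \<Rightarrow> (('b btree \<Rightarrow> 'k) \<Rightarrow> ('b btree \<Rightarrow> 'k) \<Rightarrow> ('b btree \<Rightarrow> 'k)) list \<Rightarrow> bool"
  where
  "quot_iso W1 K1 ops1 W2 K2 ops2 \<longleftrightarrow> length ops1 = length ops2 \<and>
    (\<exists>h. (\<forall>a\<in>W1. h a \<in> W2)
       \<and> (\<forall>a\<in>W1. \<forall>b\<in>W1. msub (h (madd a b)) (madd (h a) (h b)) \<in> K2)
       \<and> (\<forall>c. \<forall>a\<in>W1. msub (h (msc c a)) (msc c (h a)) \<in> K2)
       \<and> (\<forall>i<length ops1. \<forall>a\<in>W1. \<forall>b\<in>W1. msub (h ((ops1 ! i) a b)) ((ops2 ! i) (h a) (h b)) \<in> K2)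
       \<and> (\<forall>a\<in>W1. h a \<in> K2 \<longleftrightarrow> a \<in> K1)
       \<and> (\<forall>w\<in>W2. \<exists>a\<in>W1. msub w (h a) \<in> K2))"

definition collapse :: "('x + 'x) btree \<Rightarrow> ('x + 'x) btree" where
  "collapse = map_btree (\<lambda>y. Inl (case_sum id id y))"

definition phi :: "(('x + 'x) btree \<Rightarrow> 'k::field) \<Rightarrow> (('x + 'x) btree \<Rightarrow> 'k)" where
  "phi f = (\<lambda>s. \<Sum>t\<in>{t. f t \<noteq> 0 \<and> collapse t = s}. f t)"

definition opL :: "(('x + 'x) btree \<Rightarrow> 'k::field) \<Rightarrow> (('x + 'x) btree \<Rightarrow> 'k) \<Rightarrow> (('x + 'x) btree \<Rightarrow> 'k)" where
  "opL f g = mmul (phi f) g"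
definition opR :: "(('x + 'x) btree \<Rightarrow> 'k::field) \<Rightarrow> (('x + 'x) btree \<Rightarrow> 'k) \<Rightarrow> (('x + 'x) btree \<Rightarrow> 'k)" where
  "opR f g = mmul f (phi g)"

definition tri_ops :: "((('x + 'x) btree \<Rightarrow> 'k::field) \<Rightarrow> (('x + 'x) btree \<Rightarrow> 'k) \<Rightarrow> (('x + 'x) btree \<Rightarrow> 'k)) list" where
  "tri_ops = [opL, opR, mmul]"
definition di_ops :: "((('x + 'x) btree \<Rightarrow> 'k::field) \<Rightarrow> (('x + 'x) btree \<Rightarrow> 'k) \<Rightarrow> (('x + 'x) btree \<Rightarrow> 'k)) list" where
  "di_ops = [opL, opR]"

definition dot_deg :: "('x + 'x) btree \<Rightarrow> nat" where
  "dot_deg t = length (filter (\<lambda>y. case y of Inl _ \<Rightarrow> False | Inr _ \<Rightarrow> True) (leaves t))"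

definition monoms :: "'x set \<Rightarrow> ('x + 'x) btree set" where
  "monoms X = {t. set_btree t \<subseteq> Inl ` X \<union> Inr ` X}"

text \<open>Preimages in k{X \<union> dotX} of V and V_2.\<close>
definition VM :: "'x set \<Rightarrow> (('x + 'x) btree \<Rightarrow> 'k::field) set" where
  "VM X = lin_span {mono t | t. t \<in> monoms X \<and> dot_deg t \<ge> 1}"
definition V2M :: "'x set \<Rightarrow> (('x + 'x) btree \<Rightarrow> 'k::field) set" where
  "V2M X = lin_span {mono t | t. t \<in> monoms X \<and> dot_deg t = 1}"

definition dotgens :: "'x set \<Rightarrow> (('x + 'x) btree \<Rightarrow> 'k::field) set" where
  "dotgens X = {mono (Leaf (Inr x)) | x. x \<in> X}"

end

theory Submission imports Defs begin

lemma mmul_Leaf[simp]: "mmul f g (Leaf a) = 0" by (simp add: mmul_def)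
lemma mmul_Node[simp]: "mmul f g (Node a b) = f a * g b" by (simp add: mmul_def)
lemma madd_app: "madd f g t = f t + g t" by (simp add: madd_def)
lemma msub_app: "msub f g t = f t - g t" by (simp add: msub_def)
lemma msc_app: "msc c f t = c * f t" by (simp add: msc_def)
lemma mzero_app: "mzero t = 0" by (simp add: mzero_def)
lemma mono_app: "mono t s = (if s = t then 1 else 0)" by (simp add: mono_def)
lemmas mapp = madd_app msub_app msc_app mzero_app
lemma msub_self: "msub f f = mzero" by (rule ext) (simp add: mapp)

lemma collapse_Leaf[simp]: "collapse (Leaf y) = Leaf (Inl (case_sum id id y))"
  by (simp add: collapse_def)
lemma collapse_Node[simp]: "collapse (Node l r) = Node (collapse l) (collapse r)"
  by (simp add: collapse_def)

lemma dot_deg_Leaf_Inl[simp]: "dot_deg (Leaf (Inl x)) = 0" by (simp add: dot_deg_def)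
lemma dot_deg_Leaf_Inr[simp]: "dot_deg (Leaf (Inr x)) = 1" by (simp add: dot_deg_def)
lemma dot_deg_Node[simp]: "dot_deg (Node l r) = dot_deg l + dot_deg r" by (simp add: dot_deg_def)

lemma dot_deg_collapse[simp]: "dot_deg (collapse t) = 0"
  by (induction t) (auto split: sum.splits)

lemma plain_iff: "dot_deg t = 0 \<longleftrightarrow> collapse t = t"
  apply (induction t)
  subgoal for y by (cases y) auto
  by auto

definition fib :: "('x+'x) btree \<Rightarrow> ('x+'x) btree set" where "fib s = {t. collapse t = s}"

lemma fib_Leaf_Inl: "fib (Leaf (Inl x)) = {Leaf (Inl x), Leaf (Inr x)}"
proof -
  have "collapse t = Leaf (Inl x) \<longleftrightarrow> t = Leaf (Inl x) \<or> t = Leaf (Inr x)" for t :: "('a+'a) btree"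
    by (cases t; auto split: sum.splits)
  thus ?thesis unfolding fib_def by auto
qed
lemma fib_Leaf_Inr: "fib (Leaf (Inr x)) = {}"
proof -
  have "collapse t \<noteq> Leaf (Inr x)" for t :: "('a+'a) btree"
    by (cases t; auto split: sum.splits)
  thus ?thesis unfolding fib_def by auto
qed
lemma fib_Node: "fib (Node s1 s2) = (\<lambda>(l,r). Node l r) ` (fib s1 \<times> fib s2)"
proof -
  have "collapse t = Node s1 s2 \<longleftrightarrow> (\<exists>l r. t = Node l r \<and> collapse l = s1 \<and> collapse r = s2)" for t :: "('a+'a) btree"
    by (cases t; auto)
  thus ?thesis unfolding fib_def by auto
qed
lemma finite_fib[simp]: "finite (fib s)"
proof (induction s)
  case (Leaf y) then show ?case by (cases y) (auto simp: fib_Leaf_Inl fib_Leaf_Inr)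
next
  case (Node s1 s2) then show ?case by (simp add: fib_Node)
qed

lemma phi_eq: "phi f s = sum f (fib s)"
  unfolding phi_def
  by (rule sum.mono_neutral_left) (use finite_fib[of s, unfolded fib_def] in \<open>auto simp: fib_def\<close>)

lemma phi_mmul: "phi (mmul a b) = mmul (phi a) (phi b)"
proof (rule ext)
  fix s :: "('a+'a) btree"
  show "phi (mmul a b) s = mmul (phi a) (phi b) s"
  proof (cases s)
    case (Leaf y) then show ?thesis
      by (cases y) (auto simp: phi_eq fib_Leaf_Inl fib_Leaf_Inr)
  next
    case (Node s1 s2)
    have "sum (mmul a b) (fib (Node s1 s2)) = (\<Sum>(l,r)\<in>fib s1 \<times> fib s2. a l * b r)"
      unfolding fib_Node by (subst sum.reindex) (auto simp: inj_on_def intro!: sum.cong)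
    also have "... = sum a (fib s1) * sum b (fib s2)"
      by (simp add: sum_product sum.cartesian_product)
    finally show ?thesis using Node by (simp add: phi_eq mapp)
  qed
qed

lemma phi_madd: "phi (madd f g) = madd (phi f) (phi g)"
  by (rule ext) (simp add: phi_eq mapp sum.distrib)
lemma phi_msc: "phi (msc c f) = msc c (phi f)"
  by (rule ext) (simp add: phi_eq mapp sum_distrib_left)
lemma phi_mzero: "phi mzero = mzero"
  by (rule ext) (simp add: phi_eq mapp)
lemma phi_mono: "phi (mono t) = mono (collapse t)"
proof (rule ext)
  fix s
  have "sum (mono t) (fib s) = (if t \<in> fib s then 1 else 0)"
    unfolding mono_def by (simp add: sum.delta)
  thus "phi (mono t) s = mono (collapse t) s" by (auto simp: phi_eq mono_def fib_def)
qed

lemma phi_supp: "phi f s \<noteq> 0 \<Longrightarrow> dot_deg s = 0"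
proof -
  assume "phi f s \<noteq> 0"
  then obtain t where "t \<in> fib s" unfolding phi_eq by (meson sum.not_neutral_contains_not_neutral)
  thus ?thesis by (auto simp: fib_def)
qed

lemma phi_supp': "dot_deg s \<noteq> 0 \<Longrightarrow> phi f s = 0"
  by (metis phi_supp)

lemma phi_id: assumes "\<And>t. g t \<noteq> 0 \<Longrightarrow> dot_deg t = 0" shows "phi g = g"
proof (rule ext)
  fix s
  have "sum g (fib s) = sum (\<lambda>t. if t = s then g t else 0) (fib s)"
  proof (rule sum.cong)
    fix t assume "t \<in> fib s"
    hence "collapse t = s" by (simp add: fib_def)
    thus "g t = (if t = s then g t else 0)" using assms[of t] plain_iff[of t] by auto
  qed simp
  also have "... = (if s \<in> fib s then g s else 0)" by (simp add: sum.delta')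
  also have "... = g s" using assms[of s] plain_iff[of s] by (auto simp: fib_def)
  finally show "phi g s = g s" by (simp add: phi_eq mapp)
qed

lemma phi_phi: "phi (phi f) = phi f"
  by (rule phi_id) (rule phi_supp)


definition supp :: "('a btree \<Rightarrow> 'k::field) \<Rightarrow> 'a btree set" where "supp f = {t. f t \<noteq> 0}"

lemma Melt_iff: "Melt X f \<longleftrightarrow> finite (supp f) \<and> (\<forall>t\<in>supp f. t \<in> monoms X)"
  by (auto simp: Melt_def supp_def monoms_def)

lemma Melt_mzero: "Melt X mzero"
  by (simp add: Melt_iff supp_def mapp)
lemma Melt_madd: assumes "Melt X f" "Melt X g" shows "Melt X (madd f g)"
proof -
  have "supp (madd f g) \<subseteq> supp f \<union> supp g" by (auto simp: supp_def mapp)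
  thus ?thesis using assms unfolding Melt_iff by (meson UnE finite_Un finite_subset subsetD)
qed
lemma Melt_msc: assumes "Melt X f" shows "Melt X (msc c f)"
proof -
  have "supp (msc c f) \<subseteq> supp f" by (auto simp: supp_def mapp)
  thus ?thesis using assms unfolding Melt_iff by (meson finite_subset subsetD)
qed
lemma Melt_mono: "t \<in> monoms X \<Longrightarrow> Melt X (mono t)"
  by (auto simp: Melt_iff supp_def mono_def)
lemma monoms_Node[simp]: "Node l r \<in> monoms X \<longleftrightarrow> l \<in> monoms X \<and> r \<in> monoms X"
  by (auto simp: monoms_def)
lemma Melt_mmul: assumes "Melt X f" "Melt X g" shows "Melt X (mmul f g)"
proof -
  have "supp (mmul f g) \<subseteq> (\<lambda>(l,r). Node l r) ` (supp f \<times> supp g)"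
  proof
    fix t assume "t \<in> supp (mmul f g)"
    then show "t \<in> (\<lambda>(l,r). Node l r) ` (supp f \<times> supp g)"
      by (cases t) (auto simp: supp_def mapp)
  qed
  moreover have "finite ((\<lambda>(l,r). Node l r) ` (supp f \<times> supp g))"
    using assms by (simp add: Melt_iff)
  ultimately have "finite (supp (mmul f g))" by (rule finite_subset)
  moreover have "\<forall>t\<in>supp (mmul f g). t \<in> monoms X"
  proof
    fix t assume "t \<in> supp (mmul f g)"
    then obtain l r where "t = Node l r" "l \<in> supp f" "r \<in> supp g" using \<open>supp (mmul f g) \<subseteq> _\<close> by auto
    thus "t \<in> monoms X" using assms by (simp add: Melt_iff)
  qed
  ultimately show ?thesis by (simp add: Melt_iff)
qed
lemma collapse_monoms: "t \<in> monoms X \<Longrightarrow> collapse t \<in> monoms X"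
  by (auto simp: monoms_def collapse_def btree.set_map split: sum.splits)
lemma Melt_phi: assumes "Melt X f" shows "Melt X (phi f)"
proof -
  have "supp (phi f) \<subseteq> collapse ` supp f"
  proof
    fix s assume "s \<in> supp (phi f)"
    then obtain t where "t \<in> fib s" "f t \<noteq> 0" unfolding supp_def phi_eq
      by (auto dest: sum.not_neutral_contains_not_neutral)
    thus "s \<in> collapse ` supp f" by (auto simp: fib_def supp_def mapp)
  qed
  moreover have "finite (collapse ` supp f)" using assms by (simp add: Melt_iff)
  ultimately have "finite (supp (phi f))" by (rule finite_subset)
  moreover have "\<forall>t\<in>supp (phi f). t \<in> monoms X"
  proof
    fix t assume "t \<in> supp (phi f)"
    then obtain u where "t = collapse u" "u \<in> supp f" using \<open>supp (phi f) \<subseteq> _\<close> by auto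
    thus "t \<in> monoms X" using assms collapse_monoms by (auto simp: Melt_iff)
  qed
  ultimately show ?thesis by (simp add: Melt_iff)
qed

definition SpanP :: "'x set \<Rightarrow> (nat \<Rightarrow> bool) \<Rightarrow> (('x+'x) btree \<Rightarrow> 'k::field) set" where
 "SpanP X P = {f. Melt X f \<and> (\<forall>t. f t \<noteq> 0 \<longrightarrow> P (dot_deg t))}"

lemma SpanP_mzero: "mzero \<in> SpanP X P" by (simp add: SpanP_def Melt_mzero mzero_app)
lemma SpanP_madd: "f \<in> SpanP X P \<Longrightarrow> g \<in> SpanP X P \<Longrightarrow> madd f g \<in> SpanP X P"
  unfolding SpanP_def by (auto simp: Melt_madd madd_app) (metis add.right_neutral)
lemma SpanP_msc: "f \<in> SpanP X P \<Longrightarrow> msc c f \<in> SpanP X P"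
  by (auto simp: SpanP_def Melt_msc msc_app)
lemma SpanP_mono: "t \<in> monoms X \<Longrightarrow> P (dot_deg t) \<Longrightarrow> mono t \<in> SpanP X P"
  unfolding SpanP_def by (auto intro: Melt_mono simp: mono_app)

lemma span_sub: "f \<in> lin_span {mono t | t. t \<in> monoms X \<and> P (dot_deg t)} \<Longrightarrow> f \<in> SpanP X P"
  by (induction rule: subalg_gen.induct) (auto intro: SpanP_mzero SpanP_madd SpanP_msc SpanP_mono)

lemma span_sup: assumes "f \<in> SpanP X P" shows "f \<in> lin_span {mono t | t. t \<in> monoms X \<and> P (dot_deg t)}"
proof -
  let ?G = "{mono t | t. t \<in> monoms X \<and> P (dot_deg t)}"
  have "\<And>f. supp f \<subseteq> F \<Longrightarrow> f \<in> SpanP X P \<Longrightarrow> f \<in> lin_span ?G" if "finite F" for F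
    using that
  proof (induction F rule: finite_induct)
    case empty
    then have "f = mzero" by (auto simp: supp_def mzero_def)
    then show ?case by (simp add: subalg_gen.zero)
  next
    case (insert t F)
    define f' where "f' = f(t := 0)"
    have "supp f' \<subseteq> F" using insert.prems by (auto simp: supp_def f'_def)
    moreover have "f' \<in> SpanP X P" using insert.prems
      by (auto simp: SpanP_def f'_def Melt_iff supp_def intro: finite_subset)
    ultimately have IH: "f' \<in> lin_span ?G" using insert.IH by blast
    show ?case
    proof (cases "f t = 0")
      case True
      then have "f = f'" by (auto simp: f'_def)
      then show ?thesis using IH by simp
    next
      case False
      then have "t \<in> monoms X" "P (dot_deg t)" using insert.prems
        by (auto simp: SpanP_def Melt_iff supp_def mapp)
      then have "mono t \<in> lin_span ?G" by (auto intro: subalg_gen.gen)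
      then have "madd (msc (f t) (mono t)) f' \<in> lin_span ?G"
        using IH by (auto intro: subalg_gen.add subalg_gen.smult)
      moreover have "madd (msc (f t) (mono t)) f' = f"
        by (rule ext) (auto simp: f'_def mono_def mapp)
      ultimately show ?thesis by simp
    qed
  qed
  moreover have "finite (supp f)" using assms by (simp add: SpanP_def Melt_iff)
  ultimately show ?thesis using assms by blast
qed

lemma VM_eq: "VM X = SpanP X (\<lambda>d. 1 \<le> d)"
  unfolding VM_def using span_sub[of _ X "\<lambda>d. 1 \<le> d"] span_sup[of _ X "\<lambda>d. 1 \<le> d"] by blast
lemma V2M_eq: "V2M X = SpanP X (\<lambda>d. d = 1)"
  unfolding V2M_def using span_sub[of _ X "\<lambda>d. d = 1"] span_sup[of _ X "\<lambda>d. d = 1"] by blast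

definition projP :: "(nat \<Rightarrow> bool) \<Rightarrow> (('x+'x) btree \<Rightarrow> 'k::field) \<Rightarrow> (('x+'x) btree \<Rightarrow> 'k)" where
  "projP P f = (\<lambda>t. if P (dot_deg t) then f t else 0)"

lemma projP_app: "projP P f t = (if P (dot_deg t) then f t else 0)" by (simp add: projP_def mapp)
lemma projP_Span: assumes "Melt X f" shows "projP P f \<in> SpanP X P"
proof -
  have "supp (projP P f) \<subseteq> supp f" by (auto simp: supp_def projP_def mapp)
  thus ?thesis using assms unfolding SpanP_def Melt_iff
    by (auto simp: projP_def intro: finite_subset split: if_splits)
qed
lemma projP_madd: "projP P (madd f g) = madd (projP P f) (projP P g)"
  by (rule ext) (simp add: projP_def mapp)
lemma projP_msc: "projP P (msc c f) = msc c (projP P f)"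
  by (rule ext) (simp add: projP_def mapp)
lemma projP_mzero: "projP P mzero = mzero"
  by (rule ext) (simp add: projP_def mapp)
lemma projP_id: "f \<in> SpanP X P \<Longrightarrow> projP P f = f"
  by (rule ext) (auto simp: projP_def SpanP_def)
lemma projP_phi0: "projP (\<lambda>d. d = 0) (phi f) = phi f"
  apply (rule ext) subgoal for t using phi_supp'[of t f] by (simp add: projP_app) done
lemma projP_phiP: "\<not> P 0 \<Longrightarrow> projP P (phi f) = mzero"
  apply (rule ext) subgoal for t using phi_supp'[of t f] by (cases "dot_deg t = 0") (auto simp: projP_app mzero_app) done
lemma projP_zero: "f \<in> SpanP X P \<Longrightarrow> (\<And>d. P d \<Longrightarrow> \<not> Q d) \<Longrightarrow> projP Q f = mzero"
  by (rule ext) (auto simp: projP_def SpanP_def mzero_app)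

fun dot1 :: "('x+'x) btree \<Rightarrow> ('x+'x) btree" where
  "dot1 (Leaf y) = Leaf (Inr (case_sum id id y))"
| "dot1 (Node l r) = Node (dot1 l) r"

lemma dot1_collapse: "dot_deg t = 0 \<Longrightarrow> collapse (dot1 t) = t"
  by (induction t) (auto simp: plain_iff split: sum.splits)
lemma dot1_deg: "dot_deg t = 0 \<Longrightarrow> dot_deg (dot1 t) = 1"
  by (induction t) (auto split: sum.splits)
lemma dot1_monoms: "t \<in> monoms X \<Longrightarrow> dot1 t \<in> monoms X"
  by (induction t) (auto simp: monoms_def split: sum.splits)

lemma lift0: assumes "f \<in> SpanP X (\<lambda>d. d = 0)" shows "\<exists>d \<in> SpanP X (\<lambda>d. d = 1). phi d = f"
proof -
  have "f \<in> lin_span {mono t | t. t \<in> monoms X \<and> dot_deg t = 0}"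
    using span_sup[OF assms] by simp
  then show ?thesis
  proof (induction rule: subalg_gen.induct)
    case (gen g)
    then obtain t where t: "g = mono t" "t \<in> monoms X" "dot_deg t = 0" by auto
    have "mono (dot1 t) \<in> SpanP X (\<lambda>d. d = 1)"
      by (rule SpanP_mono) (simp_all add: dot1_deg dot1_monoms t)
    moreover have "phi (mono (dot1 t)) = g" using t by (simp add: phi_mono dot1_collapse)
    ultimately show ?case by blast
  next
    case zero
    have "phi mzero = mzero" by (rule phi_mzero)
    then show ?case using SpanP_mzero by blast
  next
    case (add a b)
    then obtain da db where "da \<in> SpanP X (\<lambda>d. d = 1)" "phi da = a" "db \<in> SpanP X (\<lambda>d. d = 1)" "phi db = b"
      by blast
    then have "madd da db \<in> SpanP X (\<lambda>d. d = 1)" "phi (madd da db) = madd a b"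
      by (simp_all add: SpanP_madd phi_madd)
    then show ?case by blast
  next
    case (smult a c)
    then obtain da where "da \<in> SpanP X (\<lambda>d. d = 1)" "phi da = a" by blast
    then have "msc c da \<in> SpanP X (\<lambda>d. d = 1)" "phi (msc c da) = msc c a"
      by (simp_all add: SpanP_msc phi_msc)
    then show ?case by blast
  next
    case (op p a b) then show ?case by simp
  qed
qed


lemma mmul_madd_left: "mmul (madd f g) h = madd (mmul f h) (mmul g h)"
  by (rule ext) (auto simp: mmul_def mapp distrib_right split: btree.splits)
lemma mmul_madd_right: "mmul h (madd f g) = madd (mmul h f) (mmul h g)"
  by (rule ext) (auto simp: mmul_def mapp distrib_left split: btree.splits)
lemma mmul_msc_left: "mmul (msc c f) h = msc c (mmul f h)"
  by (rule ext) (auto simp: mmul_def mapp split: btree.splits)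
lemma mmul_msc_right: "mmul h (msc c f) = msc c (mmul h f)"
  by (rule ext) (auto simp: mmul_def mapp split: btree.splits)
lemma mmul_mzero_left: "mmul mzero h = mzero"
  by (rule ext) (auto simp: mmul_def mapp split: btree.splits)
lemma mmul_mzero_right: "mmul h mzero = mzero"
  by (rule ext) (auto simp: mmul_def mapp split: btree.splits)
lemma mmul_mono: "mmul (mono a) (mono b) = mono (Node a b)"
  by (rule ext) (auto simp: mmul_def mono_def split: btree.splits)

lemma eval_mono_cong: "(\<And>i. i \<in> set (leaves t) \<Longrightarrow> u i = v i) \<Longrightarrow> eval_mono u t = eval_mono v t"
  by (induction t) auto

lemma eval_mono_lin:
  assumes "distinct (leaves t)" "i \<in> set (leaves t)"
  shows "eval_mono (u(i := madd f g)) t = madd (eval_mono (u(i := f)) t) (eval_mono (u(i := g)) t)"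
    and "eval_mono (u(i := msc c f)) t = msc c (eval_mono (u(i := f)) t)"
    and "eval_mono (u(i := mzero)) t = mzero"
  using assms
proof (induction t)
  case (Leaf j)
  { case 1 then show ?case by simp next
    case 2 then show ?case by simp next
    case 3 then show ?case by simp }
next
  case (Node a b)
  have cong: "eval_mono (u(i := x)) s = eval_mono u s" if "i \<notin> set (leaves s)" for x s
    by (rule eval_mono_cong) (use that in auto)
  { case 1
    show ?case
    proof (cases "i \<in> set (leaves a)")
      case True
      then have nb: "i \<notin> set (leaves b)" using 1 by auto
      have ea: "eval_mono (u(i := madd f g)) a = madd (eval_mono (u(i := f)) a) (eval_mono (u(i := g)) a)"
        by (rule Node.IH(1)) (use 1 True in auto)
      show ?thesis unfolding eval_mono.simps ea cong[OF nb] by (rule mmul_madd_left)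
    next
      case False
      then have na: "i \<notin> set (leaves a)" "i \<in> set (leaves b)" using 1 by auto
      have eb: "eval_mono (u(i := madd f g)) b = madd (eval_mono (u(i := f)) b) (eval_mono (u(i := g)) b)"
        by (rule Node.IH(4)) (use 1 na in auto)
      show ?thesis unfolding eval_mono.simps eb cong[OF na(1)] by (rule mmul_madd_right)
    qed
  next
    case 2
    show ?case
    proof (cases "i \<in> set (leaves a)")
      case True
      then have nb: "i \<notin> set (leaves b)" using 2 by auto
      have ea: "eval_mono (u(i := msc c f)) a = msc c (eval_mono (u(i := f)) a)"
        by (rule Node.IH(2)) (use 2 True in auto)
      show ?thesis unfolding eval_mono.simps ea cong[OF nb] by (rule mmul_msc_left)
    next
      case False
      then have na: "i \<notin> set (leaves a)" "i \<in> set (leaves b)" using 2 by auto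
      have eb: "eval_mono (u(i := msc c f)) b = msc c (eval_mono (u(i := f)) b)"
        by (rule Node.IH(5)) (use 2 na in auto)
      show ?thesis unfolding eval_mono.simps eb cong[OF na(1)] by (rule mmul_msc_right)
    qed
  next
    case 3
    show ?case
    proof (cases "i \<in> set (leaves a)")
      case True
      have ea: "eval_mono (u(i := mzero)) a = mzero"
        by (rule Node.IH(3)) (use 3 True in auto)
      show ?thesis unfolding eval_mono.simps ea by (rule mmul_mzero_left)
    next
      case False
      then have "i \<in> set (leaves b)" using 3 by auto
      have eb: "eval_mono (u(i := mzero)) b = mzero"
        by (rule Node.IH(6)) (use 3 \<open>i \<in> set (leaves b)\<close> in auto)
      show ?thesis unfolding eval_mono.simps eb by (rule mmul_mzero_right)
    qed
  }
qed


lemma eval_poly_lin: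
  assumes "\<And>t. \<Phi> t \<noteq> 0 \<Longrightarrow> distinct (leaves t) \<and> i \<in> set (leaves t)"
  shows "eval_poly \<Phi> (u(i := madd f g)) = madd (eval_poly \<Phi> (u(i := f))) (eval_poly \<Phi> (u(i := g)))"
    and "eval_poly \<Phi> (u(i := msc c f)) = msc c (eval_poly \<Phi> (u(i := f)))"
    and "eval_poly \<Phi> (u(i := mzero)) = mzero"
proof -
  show "eval_poly \<Phi> (u(i := madd f g)) = madd (eval_poly \<Phi> (u(i := f))) (eval_poly \<Phi> (u(i := g)))"
  proof (rule ext)
    fix s
    have "(\<Sum>t\<in>{t. \<Phi> t \<noteq> 0}. \<Phi> t * eval_mono (u(i := madd f g)) t s) =
          (\<Sum>t\<in>{t. \<Phi> t \<noteq> 0}. \<Phi> t * eval_mono (u(i := f)) t s + \<Phi> t * eval_mono (u(i := g)) t s)"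
    proof (rule sum.cong)
      fix t assume "t \<in> {t. \<Phi> t \<noteq> 0}"
      then have "distinct (leaves t)" "i \<in> set (leaves t)" using assms by auto
      note e = eval_mono_lin(1)[OF this, of u f g]
      show "\<Phi> t * eval_mono (u(i := madd f g)) t s = \<Phi> t * eval_mono (u(i := f)) t s + \<Phi> t * eval_mono (u(i := g)) t s"
        unfolding e madd_app by (rule distrib_left)
    qed simp
    then show "eval_poly \<Phi> (u(i := madd f g)) s = madd (eval_poly \<Phi> (u(i := f))) (eval_poly \<Phi> (u(i := g))) s"
      by (simp add: eval_poly_def mapp sum.distrib)
  qed
  show "eval_poly \<Phi> (u(i := msc c f)) = msc c (eval_poly \<Phi> (u(i := f)))"
  proof (rule ext)
    fix s
    have "(\<Sum>t\<in>{t. \<Phi> t \<noteq> 0}. \<Phi> t * eval_mono (u(i := msc c f)) t s) =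
          (\<Sum>t\<in>{t. \<Phi> t \<noteq> 0}. c * (\<Phi> t * eval_mono (u(i := f)) t s))"
    proof (rule sum.cong)
      fix t assume "t \<in> {t. \<Phi> t \<noteq> 0}"
      then have "distinct (leaves t)" "i \<in> set (leaves t)" using assms by auto
      note e = eval_mono_lin(2)[OF this, of u c f]
      show "\<Phi> t * eval_mono (u(i := msc c f)) t s = c * (\<Phi> t * eval_mono (u(i := f)) t s)"
        unfolding e msc_app by simp
    qed simp
    then show "eval_poly \<Phi> (u(i := msc c f)) s = msc c (eval_poly \<Phi> (u(i := f))) s"
      by (simp add: eval_poly_def mapp sum_distrib_left)
  qed
  show "eval_poly \<Phi> (u(i := mzero)) = mzero"
  proof (rule ext)
    fix s
    have "(\<Sum>t\<in>{t. \<Phi> t \<noteq> 0}. \<Phi> t * eval_mono (u(i := mzero)) t s) = (\<Sum>t\<in>{t. \<Phi> t \<noteq> 0}. 0)"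
    proof (rule sum.cong)
      fix t assume "t \<in> {t. \<Phi> t \<noteq> 0}"
      then have "distinct (leaves t)" "i \<in> set (leaves t)" using assms by auto
      note e = eval_mono_lin(3)[OF this, of u]
      show "\<Phi> t * eval_mono (u(i := mzero)) t s = 0"
        unfolding e mzero_app by simp
    qed simp
    then show "eval_poly \<Phi> (u(i := mzero)) s = mzero s"
      by (simp add: eval_poly_def mapp)
  qed
qed

lemma eval_poly_cong:
  assumes "\<And>t i. \<Phi> t \<noteq> 0 \<Longrightarrow> i \<in> set (leaves t) \<Longrightarrow> u i = v i"
  shows "eval_poly \<Phi> u = eval_poly \<Phi> v"
  unfolding eval_poly_def
proof (rule ext, rule sum.cong)
  fix s t assume "t \<in> {t. \<Phi> t \<noteq> 0}"
  then have "eval_mono u t = eval_mono v t" by (intro eval_mono_cong assms) auto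
  thus "\<Phi> t * eval_mono u t s = \<Phi> t * eval_mono v t s" by simp
qed simp

lemma phi_eval_mono: "phi (eval_mono u t) = eval_mono (\<lambda>i. phi (u i)) t"
  by (induction t) (auto simp: phi_mmul)

lemma phi_eval_poly:
  assumes "finite {t. \<Phi> t \<noteq> 0}"
  shows "phi (eval_poly \<Phi> u) = eval_poly \<Phi> (\<lambda>i. phi (u i))"
proof (rule ext)
  fix s
  have "phi (eval_poly \<Phi> u) s = (\<Sum>r\<in>fib s. \<Sum>t\<in>{t. \<Phi> t \<noteq> 0}. \<Phi> t * eval_mono u t r)"
    by (simp add: phi_eq eval_poly_def)
  also have "... = (\<Sum>t\<in>{t. \<Phi> t \<noteq> 0}. \<Phi> t * (\<Sum>r\<in>fib s. eval_mono u t r))"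
    by (subst sum.swap) (simp add: sum_distrib_left)
  also have "... = eval_poly \<Phi> (\<lambda>i. phi (u i)) s"
    by (simp add: eval_poly_def phi_eval_mono[symmetric] phi_eq)
  finally show "phi (eval_poly \<Phi> u) s = eval_poly \<Phi> (\<lambda>i. phi (u i)) s" .
qed

lemma eval_poly_reduce:
  assumes Q0: "Q mzero" and Qadd: "\<And>a b. Q a \<Longrightarrow> Q b \<Longrightarrow> Q (madd a b)"
    and Qsc: "\<And>c a. Q a \<Longrightarrow> Q (msc c a)"
    and pl: "\<And>t. \<Phi> t \<noteq> 0 \<Longrightarrow> distinct (leaves t) \<and> set (leaves t) = {1..n}"
    and base: "\<And>u. (\<forall>i. Melt X (u i)) \<Longrightarrow> (\<forall>i\<in>{1..n}. \<exists>t\<in>monoms X. u i = mono t) \<Longrightarrow> Q (eval_poly \<Phi> u)"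
    and u: "\<forall>i. Melt X (u i)"
  shows "Q (eval_poly \<Phi> u)"
proof -
  have claim: "\<forall>u. (\<forall>i. Melt X (u i)) \<longrightarrow> (\<forall>i. k < i \<and> i \<le> n \<longrightarrow> (\<exists>t\<in>monoms X. u i = mono t))
      \<longrightarrow> Q (eval_poly \<Phi> u)" for k
  proof (induction k)
    case 0
    show ?case
    proof (intro allI impI)
      fix u :: "nat \<Rightarrow> ('a + 'a) btree \<Rightarrow> 'b"
      assume "\<forall>i. Melt X (u i)" "\<forall>i. 0 < i \<and> i \<le> n \<longrightarrow> (\<exists>t\<in>monoms X. u i = mono t)"
      moreover then have "\<forall>i\<in>{1..n}. \<exists>t\<in>monoms X. u i = mono t" by auto
      ultimately show "Q (eval_poly \<Phi> u)" by (intro base) auto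
    qed
  next
    case (Suc k)
    show ?case
    proof (intro allI impI)
      fix u :: "nat \<Rightarrow> ('a + 'a) btree \<Rightarrow> 'b"
      assume um: "\<forall>i. Melt X (u i)" and uc: "\<forall>i. Suc k < i \<and> i \<le> n \<longrightarrow> (\<exists>t\<in>monoms X. u i = mono t)"
      show "Q (eval_poly \<Phi> u)"
      proof (cases "Suc k \<le> n")
        case False
        then have "\<forall>i. k < i \<and> i \<le> n \<longrightarrow> (\<exists>t\<in>monoms X. u i = mono t)" by auto
        then show ?thesis using Suc.IH um by blast
      next
        case True
        have lin: "\<And>t. \<Phi> t \<noteq> 0 \<Longrightarrow> distinct (leaves t) \<and> Suc k \<in> set (leaves t)"
          using pl True by auto
        have "u (Suc k) \<in> SpanP X (\<lambda>_. True)" using um by (simp add: SpanP_def)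
        then have "u (Suc k) \<in> lin_span {mono t | t. t \<in> monoms X \<and> True}" by (rule span_sup)
        then have "Q (eval_poly \<Phi> (u(Suc k := u (Suc k))))"
        proof (induction rule: subalg_gen.induct)
          case (gen g)
          then obtain t where t: "g = mono t" "t \<in> monoms X" by auto
          show ?case
          proof (rule Suc.IH[rule_format])
            show "Melt X ((u(Suc k := g)) i)" for i using um t by (simp add: Melt_mono)
            show "\<exists>ta\<in>monoms X. (u(Suc k := g)) i = mono ta" if "k < i \<and> i \<le> n" for i
            proof (cases "i = Suc k")
              case True then show ?thesis using t by auto
            next
              case False then have "Suc k < i" using that by simp
              then show ?thesis using uc that False by auto
            qed
          qed
        next
          case zero
          have "eval_poly \<Phi> (u(Suc k := mzero)) = mzero" by (rule eval_poly_lin(3)[OF lin])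
          then show ?case using Q0 unfolding fun_upd_def by simp
        next
          case (add a b)
          have "eval_poly \<Phi> (u(Suc k := madd a b)) = madd (eval_poly \<Phi> (u(Suc k := a))) (eval_poly \<Phi> (u(Suc k := b)))"
            by (rule eval_poly_lin(1)[OF lin])
          then show ?case using Qadd[OF add.IH[unfolded fun_upd_def]] unfolding fun_upd_def by simp
        next
          case (smult a c)
          have "eval_poly \<Phi> (u(Suc k := msc c a)) = msc c (eval_poly \<Phi> (u(Suc k := a)))"
            by (rule eval_poly_lin(2)[OF lin])
          then show ?case using Qsc[OF smult.IH[unfolded fun_upd_def]] unfolding fun_upd_def by simp
        next
          case (op p a b) then show ?case by simp
        qed
        then show ?thesis by simp
      qed
    qed
  qed
  show ?thesis using claim[of n] u by auto
qed


fun tsub :: "(nat \<Rightarrow> ('x+'x) btree) \<Rightarrow> nat btree \<Rightarrow> ('x+'x) btree" where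
  "tsub \<tau> (Leaf i) = \<tau> i"
| "tsub \<tau> (Node a b) = Node (tsub \<tau> a) (tsub \<tau> b)"

lemma eval_mono_tsub:
  "(\<And>i. i \<in> set (leaves t) \<Longrightarrow> u i = mono (\<tau> i)) \<Longrightarrow> eval_mono u t = mono (tsub \<tau> t)"
  by (induction t) (auto simp: mmul_mono)

lemma dd_tsub: "dot_deg (tsub \<tau> t) = sum_list (map (\<lambda>i. dot_deg (\<tau> i)) (leaves t))"
  by (induction t) auto

lemma tsub_monoms: "(\<And>i. i \<in> set (leaves t) \<Longrightarrow> \<tau> i \<in> monoms X) \<Longrightarrow> tsub \<tau> t \<in> monoms X"
  by (induction t) auto

lemma base_Span:
  fixes \<Phi> :: "nat btree \<Rightarrow> 'k::field"
  assumes fin: "finite {t. \<Phi> t \<noteq> 0}"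
    and pl: "\<And>t. \<Phi> t \<noteq> 0 \<Longrightarrow> distinct (leaves t) \<and> set (leaves t) = {1..n}"
    and tau: "\<And>i. i \<in> {1..n} \<Longrightarrow> \<tau> i \<in> monoms X"
    and u: "\<And>i. i \<in> {1..n} \<Longrightarrow> u i = mono (\<tau> i)"
  shows "eval_poly \<Phi> u \<in> SpanP X (\<lambda>d. d = (\<Sum>i\<in>{1..n}. dot_deg (\<tau> i)))"
proof -
  let ?F = "{t. \<Phi> t \<noteq> 0}"
  have ev: "eval_poly \<Phi> u s = (\<Sum>t\<in>?F. \<Phi> t * mono (tsub \<tau> t) s)" for s
    unfolding eval_poly_def
  proof (rule sum.cong)
    fix t assume "t \<in> ?F"
    then have "eval_mono u t = mono (tsub \<tau> t)" using pl u by (intro eval_mono_tsub) auto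
    then show "\<Phi> t * eval_mono u t s = \<Phi> t * mono (tsub \<tau> t) s" by simp
  qed simp
  have sup: "\<exists>t\<in>?F. s = tsub \<tau> t" if "eval_poly \<Phi> u s \<noteq> 0" for s
  proof -
    from that obtain t where "t \<in> ?F" "\<Phi> t * mono (tsub \<tau> t) s \<noteq> 0" unfolding ev
      by (meson sum.not_neutral_contains_not_neutral)
    then show ?thesis by (auto simp: mono_def split: if_splits)
  qed
  have "supp (eval_poly \<Phi> u) \<subseteq> tsub \<tau> ` ?F" using sup by (auto simp: supp_def)
  then have f1: "finite (supp (eval_poly \<Phi> u))" using fin by (meson finite_imageI finite_subset)
  have f2: "tsub \<tau> t \<in> monoms X \<and> dot_deg (tsub \<tau> t) = (\<Sum>i\<in>{1..n}. dot_deg (\<tau> i))" if "t \<in> ?F" for t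
  proof
    show "tsub \<tau> t \<in> monoms X" using pl[of t] that tau by (intro tsub_monoms) auto
    have "dot_deg (tsub \<tau> t) = sum (\<lambda>i. dot_deg (\<tau> i)) (set (leaves t))"
      unfolding dd_tsub using pl[of t] that by (simp add: sum_list_distinct_conv_sum_set)
    then show "dot_deg (tsub \<tau> t) = (\<Sum>i\<in>{1..n}. dot_deg (\<tau> i))" using pl[of t] that by simp
  qed
  show ?thesis unfolding SpanP_def Melt_iff
    using f1 sup f2 by (auto simp: supp_def)
qed


abbreviation proj0 where "proj0 \<equiv> projP (\<lambda>d. d = 0)"

definition goodP :: "(nat \<Rightarrow> bool) \<Rightarrow> ((('x+'x) btree \<Rightarrow> 'k::field) \<Rightarrow> (('x+'x) btree \<Rightarrow> 'k) \<Rightarrow> (('x+'x) btree \<Rightarrow> 'k)) list \<Rightarrow> bool" where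
  "goodP P ops \<longleftrightarrow> opL \<in> set ops \<and> opR \<in> set ops \<and>
     (\<forall>p\<in>set ops. p = opL \<or> p = opR \<or> (p = mmul \<and> (\<forall>x y. P x \<longrightarrow> P y \<longrightarrow> P (x + y)))) \<and>
     P 1 \<and> \<not> P 0 \<and> (\<forall>x y. 0 < x \<longrightarrow> 0 < y \<longrightarrow> P (x + y) \<longrightarrow> P x \<and> P y) \<and>
     ((mmul \<in> set ops \<and> (\<forall>x y. P x \<longrightarrow> P y \<longrightarrow> P (x + y))) \<or> (\<forall>x y. 0 < x \<longrightarrow> 0 < y \<longrightarrow> \<not> P (x + y)))"

lemma good_tri: "goodP (\<lambda>d. 1 \<le> d) tri_ops"
  by (auto simp: goodP_def tri_ops_def)
lemma good_di: "goodP (\<lambda>d. d = 1) di_ops"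
  by (auto simp: goodP_def di_ops_def)

lemma goodP_D1: assumes "goodP P ops" shows "opL \<in> set ops"
  using assms unfolding goodP_def by (elim conjE)
lemma goodP_D2: assumes "goodP P ops" shows "opR \<in> set ops"
  using assms unfolding goodP_def by (elim conjE)
lemma goodP_D3: assumes "goodP P ops" shows "P 1"
  using assms unfolding goodP_def by (elim conjE)
lemma goodP_D4: assumes "goodP P ops" shows "\<not> P 0"
  using assms unfolding goodP_def by (elim conjE)
lemma goodP_D5: assumes "goodP P ops" shows "\<forall>x y. 0 < x \<longrightarrow> 0 < y \<longrightarrow> P (x + y) \<longrightarrow> P x \<and> P y"
  using assms unfolding goodP_def by (elim conjE)
lemma goodP_D6: assumes "goodP P ops" shows "(mmul \<in> set ops \<and> (\<forall>x y. P x \<longrightarrow> P y \<longrightarrow> P (x + y))) \<or> (\<forall>x y. 0 < x \<longrightarrow> 0 < y \<longrightarrow> \<not> P (x + y))"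
  using assms unfolding goodP_def by (elim conjE)

lemma SpanP_opL: assumes "Melt X f" "g \<in> SpanP X P" shows "opL f g \<in> SpanP X P"
proof -
  have "Melt X (opL f g)" using assms by (simp add: opL_def SpanP_def Melt_mmul Melt_phi)
  moreover have "P (dot_deg t)" if "opL f g t \<noteq> 0" for t
  proof (cases t)
    case (Leaf a) then show ?thesis using that by (simp add: opL_def)
  next
    case (Node l r)
    then have "phi f l \<noteq> 0" "g r \<noteq> 0" using that by (auto simp: opL_def)
    then show ?thesis using Node phi_supp[of f l] assms(2) by (auto simp: SpanP_def)
  qed
  ultimately show ?thesis by (simp add: SpanP_def)
qed

lemma SpanP_opR: assumes "f \<in> SpanP X P" "Melt X g" shows "opR f g \<in> SpanP X P"
proof -
  have "Melt X (opR f g)" using assms by (simp add: opR_def SpanP_def Melt_mmul Melt_phi)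
  moreover have "P (dot_deg t)" if "opR f g t \<noteq> 0" for t
  proof (cases t)
    case (Leaf a) then show ?thesis using that by (simp add: opR_def)
  next
    case (Node l r)
    then have "f l \<noteq> 0" "phi g r \<noteq> 0" using that by (auto simp: opR_def)
    then show ?thesis using Node phi_supp[of g r] assms(1) by (auto simp: SpanP_def)
  qed
  ultimately show ?thesis by (simp add: SpanP_def)
qed

lemma SpanP_mmul: assumes "\<forall>x y. P x \<longrightarrow> P y \<longrightarrow> P (x + y)" "f \<in> SpanP X P" "g \<in> SpanP X P"
  shows "mmul f g \<in> SpanP X P"
proof -
  have "Melt X (mmul f g)" using assms by (simp add: SpanP_def Melt_mmul)
  moreover have "P (dot_deg t)" if "mmul f g t \<noteq> 0" for t
  proof (cases t)
    case (Leaf a) then show ?thesis using that by simp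
  next
    case (Node l r)
    then have "f l \<noteq> 0" "g r \<noteq> 0" using that by auto
    then show ?thesis using Node assms by (auto simp: SpanP_def)
  qed
  ultimately show ?thesis by (simp add: SpanP_def)
qed

lemma SpanP_Melt: "f \<in> SpanP X P \<Longrightarrow> Melt X f" by (simp add: SpanP_def)

lemma SpanP_ops: assumes "goodP P ops" "p \<in> set ops" "f \<in> SpanP X P" "g \<in> SpanP X P"
  shows "p f g \<in> SpanP X P"
proof -
  have h: "\<forall>p\<in>set ops. p = opL \<or> p = opR \<or> (p = mmul \<and> (\<forall>x y. P x \<longrightarrow> P y \<longrightarrow> P (x + y)))"
    using assms(1) unfolding goodP_def by (elim conjE)
  have "p = opL \<or> p = opR \<or> (p = mmul \<and> (\<forall>x y. P x \<longrightarrow> P y \<longrightarrow> P (x + y)))"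
    using bspec[OF h assms(2)] .
  then show ?thesis
  proof (elim disjE conjE)
    assume "p = opL" then show ?thesis using assms(3,4) by (simp add: SpanP_opL SpanP_Melt)
  next
    assume "p = opR" then show ?thesis using assms(3,4) by (simp add: SpanP_opR SpanP_Melt)
  next
    assume "p = mmul" "\<forall>x y. P x \<longrightarrow> P y \<longrightarrow> P (x + y)"
    then show ?thesis using assms(3,4) by (simp add: SpanP_mmul)
  qed
qed

lemma SpanP_sub: "(\<And>d. Q d \<Longrightarrow> P d) \<Longrightarrow> f \<in> SpanP X Q \<Longrightarrow> f \<in> SpanP X P"
  by (auto simp: SpanP_def)

lemma J_Span: assumes "goodP P ops" "G \<subseteq> SpanP X P" "a \<in> relideal_gen (SpanP X P) G ops"
  shows "a \<in> SpanP X P"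
  using assms(3)
proof (induction rule: relideal_gen.induct)
  case (gen g) then show ?case using assms(2) by blast
next
  case zero then show ?case by (rule SpanP_mzero)
next
  case (add a b) then show ?case by (blast intro: SpanP_madd)
next
  case (smult a c) then show ?case by (blast intro: SpanP_msc)
next
  case (opr p a w) then show ?case using SpanP_ops[OF assms(1)] by blast
next
  case (opl p a w) then show ?case using SpanP_ops[OF assms(1)] by blast
qed

lemma proj_mmul_decomp:
  assumes "\<not> P 0" "\<forall>x y. 0 < x \<longrightarrow> 0 < y \<longrightarrow> P (x + y) \<longrightarrow> P x \<and> P y"
  shows "projP P (mmul f g) = madd (madd (projP P (mmul (projP P f) (projP P g)))
            (mmul (projP P f) (proj0 g))) (mmul (proj0 f) (projP P g))"
proof (rule ext)
  fix t show "projP P (mmul f g) t = madd (madd (projP P (mmul (projP P f) (projP P g)))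
            (mmul (projP P f) (proj0 g))) (mmul (proj0 f) (projP P g)) t"
  proof (cases t)
    case (Leaf a) then show ?thesis by (simp add: projP_app mapp)
  next
    case (Node l r)
    show ?thesis
    proof (cases "dot_deg l = 0")
      case True then show ?thesis using Node assms(1) by (simp add: projP_app mapp)
    next
      case False
      show ?thesis
      proof (cases "dot_deg r = 0")
        case True then show ?thesis using Node assms(1) False by (simp add: projP_app mapp)
      next
        case False2: False
        have "P (dot_deg l + dot_deg r) \<Longrightarrow> P (dot_deg l) \<and> P (dot_deg r)"
          using assms(2) False False2 by blast
        then show ?thesis using Node False False2
          by (cases "P (dot_deg l + dot_deg r)") (simp_all add: projP_app mapp)
      qed
    qed
  qed
qed

lemma proj0_mmul: "proj0 (mmul f g) = mmul (proj0 f) (proj0 g)"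
proof (rule ext)
  fix t show "proj0 (mmul f g) t = mmul (proj0 f) (proj0 g) t"
    by (cases t) (auto simp: projP_app)
qed

lemma cross_term:
  assumes "goodP P ops" "x \<in> SpanP X P" "w \<in> SpanP X P"
  shows "(mmul \<in> set ops \<and> projP P (mmul x w) = mmul x w) \<or> projP P (mmul x w) = mzero"
proof -
  have np: "\<not> P 0" using assms(1) by (rule goodP_D4)
  from assms(1) have "(mmul \<in> set ops \<and> (\<forall>x y. P x \<longrightarrow> P y \<longrightarrow> P (x + y))) \<or> (\<forall>x y. 0 < x \<longrightarrow> 0 < y \<longrightarrow> \<not> P (x + y))"
    by (rule goodP_D6)
  then show ?thesis
  proof
    assume a: "mmul \<in> set ops \<and> (\<forall>x y. P x \<longrightarrow> P y \<longrightarrow> P (x + y))"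
    then have "mmul x w \<in> SpanP X P" using SpanP_mmul assms(2,3) by blast
    then have "projP P (mmul x w) = mmul x w" by (rule projP_id)
    then show ?thesis using a by simp
  next
    assume a: "\<forall>x y. 0 < x \<longrightarrow> 0 < y \<longrightarrow> \<not> P (x + y)"
    have "projP P (mmul x w) t = 0" for t
    proof (cases t)
      case (Leaf a) then show ?thesis by (simp add: projP_app)
    next
      case (Node l r)
      show ?thesis
      proof (cases "x l = 0 \<or> w r = 0")
        case True then show ?thesis using Node by (auto simp: projP_app)
      next
        case False
        then have "P (dot_deg l)" "P (dot_deg r)" using assms(2,3) by (auto simp: SpanP_def)
        then have "dot_deg l \<noteq> 0" "dot_deg r \<noteq> 0" using np by (metis, metis)
        then have "0 < dot_deg l" "0 < dot_deg r" by simp_all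
        then have "\<not> P (dot_deg l + dot_deg r)" using a by blast
        then show ?thesis using Node by (simp add: projP_app)
      qed
    qed
    then show ?thesis by (intro disjI2 ext) (simp add: mzero_app)
  qed
qed

definition Inv :: "(nat \<Rightarrow> bool) \<Rightarrow> (('x+'x) btree \<Rightarrow> 'k::field) set \<Rightarrow> (('x+'x) btree \<Rightarrow> 'k) \<Rightarrow> bool" where
  "Inv P J a \<longleftrightarrow> projP P a \<in> J \<and> (\<exists>b\<in>J. proj0 a = phi b)"


lemma leaves_ne: "leaves t \<noteq> []"
  by (induction t) auto

context
  fixes X :: "'x set" and P :: "nat \<Rightarrow> bool"
    and ops :: "((('x+'x) btree \<Rightarrow> 'k::field) \<Rightarrow> (('x+'x) btree \<Rightarrow> 'k) \<Rightarrow> (('x+'x) btree \<Rightarrow> 'k)) list"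
    and G :: "(('x+'x) btree \<Rightarrow> 'k) set"
  assumes good: "goodP P ops" and GS: "G \<subseteq> SpanP X P"
begin

abbreviation "JJ \<equiv> relideal_gen (SpanP X P) G ops"

lemma JJ_Span: "a \<in> JJ \<Longrightarrow> a \<in> SpanP X P"
  using J_Span[OF good GS] by blast

lemma Inv_mzero: "Inv P JJ mzero"
proof -
  have "mzero \<in> JJ" by (rule relideal_gen.zero)
  moreover have "proj0 mzero = phi mzero" by (simp add: projP_mzero phi_mzero)
  ultimately show ?thesis by (auto simp: Inv_def projP_mzero)
qed

lemma Inv_madd: assumes "Inv P JJ a" "Inv P JJ b" shows "Inv P JJ (madd a b)"
proof -
  from assms obtain ba bb where "projP P a \<in> JJ" "ba \<in> JJ" "proj0 a = phi ba"
      "projP P b \<in> JJ" "bb \<in> JJ" "proj0 b = phi bb" by (auto simp: Inv_def)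
  then have "projP P (madd a b) \<in> JJ" "madd ba bb \<in> JJ" "proj0 (madd a b) = phi (madd ba bb)"
    by (auto simp: projP_madd phi_madd intro: relideal_gen.add)
  then show ?thesis unfolding Inv_def by blast
qed

lemma Inv_msc: assumes "Inv P JJ a" shows "Inv P JJ (msc c a)"
proof -
  from assms obtain ba where "projP P a \<in> JJ" "ba \<in> JJ" "proj0 a = phi ba" by (auto simp: Inv_def)
  then have "projP P (msc c a) \<in> JJ" "msc c ba \<in> JJ" "proj0 (msc c a) = phi (msc c ba)"
    by (auto simp: projP_msc phi_msc intro: relideal_gen.smult)
  then show ?thesis unfolding Inv_def by blast
qed

lemma Inv_mulr: assumes "Inv P JJ a" "Melt X m" shows "Inv P JJ (mmul a m)"
proof -
  from assms(1) obtain b where pa: "projP P a \<in> JJ" and b: "b \<in> JJ" "proj0 a = phi b"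
    by (auto simp: Inv_def)
  have pm: "projP P m \<in> SpanP X P" using assms(2) by (rule projP_Span)
  have "proj0 m \<in> SpanP X (\<lambda>d. d = 0)" using assms(2) by (rule projP_Span)
  then obtain d where d1: "d \<in> SpanP X (\<lambda>d. d = 1)" and dphi: "phi d = proj0 m" using lift0 by blast
  have P1: "P 1" using good by (rule goodP_D3)
  have dS: "d \<in> SpanP X P" by (rule SpanP_sub[OF _ d1]) (use P1 in simp)
  have opL_in: "opL \<in> set ops" using good by (rule goodP_D1)
  have opR_in: "opR \<in> set ops" using good by (rule goodP_D2)
  have paS: "projP P a \<in> SpanP X P" using pa by (rule JJ_Span)
  have t1: "projP P (mmul (projP P a) (projP P m)) \<in> JJ"
    using cross_term[OF good paS pm]
  proof
    assume h: "mmul \<in> set ops \<and> projP P (mmul (projP P a) (projP P m)) = mmul (projP P a) (projP P m)"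
    then show ?thesis using relideal_gen.opr[OF _ pa pm, of mmul] by simp
  next
    assume "projP P (mmul (projP P a) (projP P m)) = mzero"
    then show ?thesis by (simp add: relideal_gen.zero)
  qed
  have t2: "mmul (projP P a) (proj0 m) \<in> JJ"
  proof -
    have "mmul (projP P a) (proj0 m) = opR (projP P a) d" by (simp add: opR_def dphi)
    also have "... \<in> JJ" by (rule relideal_gen.opr[OF opR_in pa dS])
    finally show ?thesis .
  qed
  have t3: "mmul (proj0 a) (projP P m) \<in> JJ"
  proof -
    have "mmul (proj0 a) (projP P m) = opL b (projP P m)" by (simp add: opL_def b(2))
    also have "... \<in> JJ" by (rule relideal_gen.opr[OF opL_in b(1) pm])
    finally show ?thesis .
  qed
  have "projP P (mmul a m) = madd (madd (projP P (mmul (projP P a) (projP P m)))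
            (mmul (projP P a) (proj0 m))) (mmul (proj0 a) (projP P m))"
    by (rule proj_mmul_decomp[OF goodP_D4[OF good] goodP_D5[OF good]])
  then have c1: "projP P (mmul a m) \<in> JJ" using t1 t2 t3 by (simp add: relideal_gen.add)
  have "proj0 (mmul a m) = mmul (phi b) (phi d)" by (simp add: proj0_mmul b(2) dphi)
  moreover have "phi (opR b d) = mmul (phi b) (phi d)" by (simp add: opR_def phi_mmul phi_phi)
  ultimately have c2: "proj0 (mmul a m) = phi (opR b d)" by simp
  have c3: "opR b d \<in> JJ" by (rule relideal_gen.opr[OF opR_in b(1) dS])
  show ?thesis unfolding Inv_def using c1 c2 c3 by blast
qed

lemma Inv_mull: assumes "Inv P JJ a" "Melt X m" shows "Inv P JJ (mmul m a)"
proof -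
  from assms(1) obtain b where pa: "projP P a \<in> JJ" and b: "b \<in> JJ" "proj0 a = phi b"
    by (auto simp: Inv_def)
  have pm: "projP P m \<in> SpanP X P" using assms(2) by (rule projP_Span)
  have "proj0 m \<in> SpanP X (\<lambda>d. d = 0)" using assms(2) by (rule projP_Span)
  then obtain d where d1: "d \<in> SpanP X (\<lambda>d. d = 1)" and dphi: "phi d = proj0 m" using lift0 by blast
  have P1: "P 1" using good by (rule goodP_D3)
  have dS: "d \<in> SpanP X P" by (rule SpanP_sub[OF _ d1]) (use P1 in simp)
  have opL_in: "opL \<in> set ops" using good by (rule goodP_D1)
  have opR_in: "opR \<in> set ops" using good by (rule goodP_D2)
  have paS: "projP P a \<in> SpanP X P" using pa by (rule JJ_Span)
  have t1: "projP P (mmul (projP P m) (projP P a)) \<in> JJ"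
    using cross_term[OF good pm paS]
  proof
    assume h: "mmul \<in> set ops \<and> projP P (mmul (projP P m) (projP P a)) = mmul (projP P m) (projP P a)"
    then show ?thesis using relideal_gen.opl[OF _ pa pm, of mmul] by simp
  next
    assume "projP P (mmul (projP P m) (projP P a)) = mzero"
    then show ?thesis by (simp add: relideal_gen.zero)
  qed
  have t2: "mmul (projP P m) (proj0 a) \<in> JJ"
  proof -
    have "mmul (projP P m) (proj0 a) = opR (projP P m) b" by (simp add: opR_def b(2))
    also have "... \<in> JJ" by (rule relideal_gen.opl[OF opR_in b(1) pm])
    finally show ?thesis .
  qed
  have t3: "mmul (proj0 m) (projP P a) \<in> JJ"
  proof -
    have "mmul (proj0 m) (projP P a) = opL d (projP P a)" by (simp add: opL_def dphi)
    also have "... \<in> JJ" by (rule relideal_gen.opl[OF opL_in pa dS])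
    finally show ?thesis .
  qed
  have "projP P (mmul m a) = madd (madd (projP P (mmul (projP P m) (projP P a)))
            (mmul (projP P m) (proj0 a))) (mmul (proj0 m) (projP P a))"
    by (rule proj_mmul_decomp[OF goodP_D4[OF good] goodP_D5[OF good]])
  then have c1: "projP P (mmul m a) \<in> JJ" using t1 t2 t3 by (simp add: relideal_gen.add)
  have "proj0 (mmul m a) = mmul (phi d) (phi b)" by (simp add: proj0_mmul b(2) dphi)
  moreover have "phi (opL d b) = mmul (phi d) (phi b)" by (simp add: opL_def phi_mmul phi_phi)
  ultimately have c2: "proj0 (mmul m a) = phi (opL d b)" by simp
  have c3: "opL d b \<in> JJ" by (rule relideal_gen.opl[OF opL_in b(1) dS])
  show ?thesis unfolding Inv_def using c1 c2 c3 by blast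
qed

lemma Inv_ideal: assumes "\<And>g. g \<in> H \<Longrightarrow> Inv P JJ g" "a \<in> ideal_gen X H" shows "Inv P JJ a"
  using assms(2)
proof (induction rule: ideal_gen.induct)
  case (gen g) then show ?case by (rule assms(1))
next
  case zero then show ?case by (rule Inv_mzero)
next
  case (add a b) then show ?case by (blast intro: Inv_madd)
next
  case (smult a c) then show ?case by (blast intro: Inv_msc)
next
  case (mulr a m) then show ?case by (blast intro: Inv_mulr)
next
  case (mull a m) then show ?case by (blast intro: Inv_mull)
qed

lemma Inv_G: assumes "g \<in> G" shows "Inv P JJ g"
proof -
  have gS: "g \<in> SpanP X P" using assms GS by blast
  have "projP P g = g" using gS by (rule projP_id)
  moreover have "g \<in> JJ" using assms by (rule relideal_gen.gen)
  moreover have "proj0 g = mzero"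
  proof (rule projP_zero[OF gS])
    fix d assume "P d" then show "\<not> d = 0" using goodP_D4[OF good] by metis
  qed
  then have "proj0 g = phi mzero" by (simp add: phi_mzero)
  moreover have "mzero \<in> JJ" by (rule relideal_gen.zero)
  ultimately show ?thesis unfolding Inv_def by auto
qed

lemma Inv_phiG: assumes "g \<in> G" shows "Inv P JJ (phi g)"
proof -
  have "projP P (phi g) = mzero" using goodP_D4[OF good] by (rule projP_phiP)
  moreover have "mzero \<in> JJ" by (rule relideal_gen.zero)
  moreover have "g \<in> JJ" using assms by (rule relideal_gen.gen)
  ultimately show ?thesis unfolding Inv_def using projP_phi0 by metis
qed


lemma Inv_Tgen:
  fixes \<Phi> :: "nat btree \<Rightarrow> 'k" and Tset :: "(('x+'x) btree \<Rightarrow> 'k) set"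
  assumes TJ: "\<And>x. x \<in> SpanP X P \<Longrightarrow> x \<in> Tset \<Longrightarrow> x \<in> JJ"
    and Tev: "\<And>u. \<forall>i. Melt X (u i) \<Longrightarrow> eval_poly \<Phi> u \<in> Tset"
    and pl: "polylinear \<Phi>" and u0: "\<forall>i. Melt X (u0 i)"
  shows "Inv P JJ (eval_poly \<Phi> u0)"
proof -
  from pl obtain n where fin: "finite {t. \<Phi> t \<noteq> 0}"
    and pln: "\<And>t. \<Phi> t \<noteq> 0 \<Longrightarrow> distinct (leaves t) \<and> set (leaves t) = {1..n}"
    unfolding polylinear_def by blast
  have np: "\<not> P 0" using good by (rule goodP_D4)
  have P1: "P 1" using good by (rule goodP_D3)
  show ?thesis
  proof (rule eval_poly_reduce[where Q = "Inv P JJ" and n = n, OF Inv_mzero Inv_madd Inv_msc pln _ u0])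
    fix u :: "nat \<Rightarrow> ('x+'x) btree \<Rightarrow> 'k"
    assume um: "\<forall>i. Melt X (u i)" and mon: "\<forall>i\<in>{1..n}. \<exists>t\<in>monoms X. u i = mono t"
    define \<tau> where "\<tau> i = (SOME t. t \<in> monoms X \<and> u i = mono t)" for i
    have tau: "\<tau> i \<in> monoms X \<and> u i = mono (\<tau> i)" if "i \<in> {1..n}" for i
    proof -
      from mon that obtain t where "t \<in> monoms X \<and> u i = mono t" by blast
      then show ?thesis unfolding \<tau>_def by (rule someI)
    qed
    define N where "N = (\<Sum>i\<in>{1..n}. dot_deg (\<tau> i))"
    let ?g = "eval_poly \<Phi> u"
    have gS: "?g \<in> SpanP X (\<lambda>d. d = N)" unfolding N_def
      by (rule base_Span[OF fin pln]) (use tau in auto)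
    have gT: "?g \<in> Tset" using um by (rule Tev)
    have mz: "mzero \<in> JJ" by (rule relideal_gen.zero)
    show "Inv P JJ ?g"
    proof (cases "P N")
      case True
      have gP: "?g \<in> SpanP X P" by (rule SpanP_sub[OF _ gS]) (use True in simp)
      have "projP P ?g = ?g" using gP by (rule projP_id)
      then have c1: "projP P ?g \<in> JJ" using TJ[OF gP gT] by simp
      have "N \<noteq> 0" using True np by metis
      have "proj0 ?g = mzero"
      proof (rule projP_zero[OF gS])
        fix d assume "d = N" then show "\<not> d = 0" using \<open>N \<noteq> 0\<close> by simp
      qed
      then have "proj0 ?g = phi mzero" by (simp add: phi_mzero)
      then show ?thesis unfolding Inv_def using c1 mz by blast
    next
      case False
      have "projP P ?g = mzero"
      proof (rule projP_zero[OF gS])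
        fix d assume "d = N" then show "\<not> P d" using False by simp
      qed
      then have c1: "projP P ?g \<in> JJ" using mz by simp
      show ?thesis
      proof (cases "N = 0")
        case False
        have "proj0 ?g = mzero"
        proof (rule projP_zero[OF gS])
          fix d assume "d = N" then show "\<not> d = 0" using False by simp
        qed
        then have "proj0 ?g = phi mzero" by (simp add: phi_mzero)
        then show ?thesis unfolding Inv_def using c1 mz by blast
      next
        case True
        have gS0: "?g \<in> SpanP X (\<lambda>d. d = 0)" using gS True by simp
        have p0: "proj0 ?g = ?g" using gS0 by (rule projP_id)
        show ?thesis
        proof (cases "{t. \<Phi> t \<noteq> 0} = {}")
          case True
          then have "?g = mzero" by (simp add: eval_poly_def mzero_def)
          then have "proj0 ?g = phi mzero" using p0 by (simp add: phi_mzero)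
          then show ?thesis unfolding Inv_def using c1 mz by blast
        next
          case False
          then obtain t0 where "\<Phi> t0 \<noteq> 0" by blast
          then have "set (leaves t0) = {1..n}" using pln by blast
          moreover have "set (leaves t0) \<noteq> {}" using leaves_ne[of t0] by simp
          ultimately have n1: "1 \<in> {1..n}" by auto
          have dd0: "dot_deg (\<tau> i) = 0" if "i \<in> {1..n}" for i
            using True that unfolding N_def by simp
          define \<tau>' where "\<tau>' = \<tau>(1 := dot1 (\<tau> 1))"
          define u' where "u' = u(1 := mono (dot1 (\<tau> 1)))"
          have t1m: "\<tau> 1 \<in> monoms X" using tau[OF n1] by simp
          have um': "\<forall>i. Melt X (u' i)"
            using um t1m by (simp add: u'_def Melt_mono dot1_monoms)
          have tau': "\<tau>' i \<in> monoms X" "u' i = mono (\<tau>' i)" if "i \<in> {1..n}" for i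
            using tau[OF that] t1m by (auto simp: \<tau>'_def u'_def dot1_monoms)
          have bS1: "eval_poly \<Phi> u' \<in> SpanP X (\<lambda>d. d = (\<Sum>i\<in>{1..n}. dot_deg (\<tau>' i)))"
            by (rule base_Span[OF fin pln]) (use tau' in auto)
          have "(\<Sum>i\<in>{1..n}. dot_deg (\<tau>' i)) = dot_deg (\<tau>' 1) + (\<Sum>i\<in>{1..n} - {1}. dot_deg (\<tau>' i))"
            by (rule sum.remove) (use n1 in auto)
          also have "(\<Sum>i\<in>{1..n} - {1}. dot_deg (\<tau>' i)) = 0"
            by (rule sum.neutral) (auto simp: \<tau>'_def dd0)
          also have "dot_deg (\<tau>' 1) = 1" using dd0[OF n1] by (simp add: \<tau>'_def dot1_deg)
          finally have "(\<Sum>i\<in>{1..n}. dot_deg (\<tau>' i)) = 1" by simp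
          then have bS: "eval_poly \<Phi> u' \<in> SpanP X P"
            using bS1 by (intro SpanP_sub[OF _ bS1]) (use P1 in simp)
          have bJ: "eval_poly \<Phi> u' \<in> JJ" using TJ[OF bS Tev[OF um']] .
          have "phi (eval_poly \<Phi> u') = eval_poly \<Phi> (\<lambda>i. phi (u' i))" by (rule phi_eval_poly[OF fin])
          also have "... = ?g"
          proof (rule eval_poly_cong)
            fix t i assume "\<Phi> t \<noteq> 0" "i \<in> set (leaves t)"
            then have i: "i \<in> {1..n}" using pln by blast
            show "phi (u' i) = u i"
            proof (cases "i = 1")
              case True
              then show ?thesis using tau[OF i] dd0[OF i]
                by (simp add: u'_def phi_mono dot1_collapse)
            next
              case False
              have "collapse (\<tau> i) = \<tau> i" using dd0[OF i] plain_iff by blast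
              then show ?thesis using tau[OF i] False by (simp add: u'_def phi_mono)
            qed
          qed
          finally have "proj0 ?g = phi (eval_poly \<Phi> u')" using p0 by simp
          then show ?thesis unfolding Inv_def using c1 bJ by blast
        qed
      qed
    qed
  qed
qed

end


lemma dot1_in_A:
  assumes opR_in: "opR \<in> set ops" and "t \<in> monoms X" "dot_deg t = 0"
  shows "mono (dot1 t) \<in> subalg_gen (dotgens X) ops"
  using assms(2,3)
proof (induction t)
  case (Leaf y)
  have "\<exists>x. y = Inl x \<and> x \<in> X"
  proof (cases y)
    case (Inl x) then show ?thesis using Leaf.prems(1) by (simp add: monoms_def image_iff)
  next
    case (Inr x) then show ?thesis using Leaf.prems(2) by simp
  qed
  then obtain x where "y = Inl x" "x \<in> X" by blast
  then have "mono (dot1 (Leaf y)) \<in> dotgens X" by (auto simp: dotgens_def)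
  then show ?case by (rule subalg_gen.gen)
next
  case (Node l r)
  have lm: "l \<in> monoms X" "dot_deg l = 0" and rm: "r \<in> monoms X" "dot_deg r = 0"
    using Node.prems by auto
  have ph: "phi (mono (dot1 r)) = mono r" using rm(2) by (simp add: phi_mono dot1_collapse)
  have "mono (dot1 (Node l r)) = opR (mono (dot1 l)) (mono (dot1 r))"
    unfolding opR_def ph mmul_mono by simp
  also have "... \<in> subalg_gen (dotgens X) ops"
    by (rule subalg_gen.op[OF opR_in Node.IH(1)[OF lm] Node.IH(2)[OF rm]])
  finally show ?case .
qed

lemma mono_in_A:
  assumes good: "goodP P ops" and "t \<in> monoms X" "P (dot_deg t)"
  shows "mono t \<in> subalg_gen (dotgens X) ops"
  using assms(2,3)
proof (induction t)
  case (Leaf y)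
  have "\<exists>x. y = Inr x \<and> x \<in> X"
  proof (cases y)
    case (Inl x) then show ?thesis using Leaf.prems(2) goodP_D4[OF good] by simp
  next
    case (Inr x) then show ?thesis using Leaf.prems(1) by (simp add: monoms_def image_iff)
  qed
  then obtain x where "y = Inr x" "x \<in> X" by blast
  then show ?case by (auto simp: dotgens_def intro!: subalg_gen.gen)
next
  case (Node l r)
  have opL_in: "opL \<in> set ops" using good by (rule goodP_D1)
  have opR_in: "opR \<in> set ops" using good by (rule goodP_D2)
  have lm: "l \<in> monoms X" and rm: "r \<in> monoms X" using Node.prems by auto
  show ?case
  proof (cases "dot_deg l = 0")
    case True
    have "mono (Node l r) = opL (mono (dot1 l)) (mono r)"
      using True by (simp add: opL_def phi_mono dot1_collapse mmul_mono)
    also have "... \<in> subalg_gen (dotgens X) ops"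
      by (rule subalg_gen.op[OF opL_in dot1_in_A[OF opR_in lm True] Node.IH(2)[OF rm]])
        (use Node.prems True in simp)
    finally show ?thesis .
  next
    case False
    show ?thesis
    proof (cases "dot_deg r = 0")
      case True
      have "mono (Node l r) = opR (mono l) (mono (dot1 r))"
        using True by (simp add: opR_def phi_mono dot1_collapse mmul_mono)
      also have "... \<in> subalg_gen (dotgens X) ops"
        by (rule subalg_gen.op[OF opR_in Node.IH(1)[OF lm] dot1_in_A[OF opR_in rm True]])
          (use Node.prems True in simp)
      finally show ?thesis .
    next
      case False2: False
      have s: "P (dot_deg l + dot_deg r)" using Node.prems(2) by simp
      have pos: "0 < dot_deg l" "0 < dot_deg r" using False False2 by simp_all
      have Ps: "P (dot_deg l) \<and> P (dot_deg r)"
        using goodP_D5[OF good] pos s by blast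
      have "\<not> (\<forall>x y. 0 < x \<longrightarrow> 0 < y \<longrightarrow> \<not> P (x + y))"
        using pos s by blast
      then have mm: "mmul \<in> set ops" using goodP_D6[OF good] by blast
      have "mono (Node l r) = mmul (mono l) (mono r)" by (simp add: mmul_mono)
      also have "... \<in> subalg_gen (dotgens X) ops"
        by (rule subalg_gen.op[OF mm Node.IH(1)[OF lm] Node.IH(2)[OF rm]]) (use Ps in auto)
      finally show ?thesis .
    qed
  qed
qed

lemma A_eq:
  fixes ops :: "((('x+'x) btree \<Rightarrow> 'k::field) \<Rightarrow> (('x+'x) btree \<Rightarrow> 'k) \<Rightarrow> (('x+'x) btree \<Rightarrow> 'k)) list"
  assumes good: "goodP P ops" shows "subalg_gen (dotgens X) ops = (SpanP X P :: (('x+'x) btree \<Rightarrow> 'k) set)"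
proof
  show "subalg_gen (dotgens X) ops \<subseteq> SpanP X P"
  proof
    fix a :: "('x+'x) btree \<Rightarrow> 'k" assume "a \<in> subalg_gen (dotgens X) ops"
    then show "a \<in> SpanP X P"
    proof (induction rule: subalg_gen.induct)
      case (gen g)
      then obtain x where "g = mono (Leaf (Inr x))" "x \<in> X" by (auto simp: dotgens_def)
      then show ?case using goodP_D3[OF good] by (auto intro!: SpanP_mono simp: monoms_def)
    next
      case zero then show ?case by (rule SpanP_mzero)
    next
      case (add a b) then show ?case by (blast intro: SpanP_madd)
    next
      case (smult a c) then show ?case by (blast intro: SpanP_msc)
    next
      case (op p a b) then show ?case using SpanP_ops[OF good] by blast
    qed
  qed
next
  show "SpanP X P \<subseteq> subalg_gen (dotgens X) ops"
  proof
    fix a :: "('x+'x) btree \<Rightarrow> 'k" assume "a \<in> SpanP X P"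
    then have "a \<in> lin_span {mono t | t. t \<in> monoms X \<and> P (dot_deg t)}" by (rule span_sup)
    then show "a \<in> subalg_gen (dotgens X) ops"
    proof (induction rule: subalg_gen.induct)
      case (gen g)
      then obtain t where "g = mono t" "t \<in> monoms X" "P (dot_deg t)" by auto
      then show ?case using mono_in_A[OF good] by blast
    next
      case zero then show ?case by (rule subalg_gen.zero)
    next
      case (add a b) then show ?case by (blast intro: subalg_gen.add)
    next
      case (smult a c) then show ?case by (blast intro: subalg_gen.smult)
    next
      case (op p a b) then show ?case by simp
    qed
  qed
qed

lemma phi_ideal:
  assumes "\<And>g. g \<in> G \<Longrightarrow> phi g \<in> ideal_gen X H" "a \<in> ideal_gen X G"
  shows "phi a \<in> ideal_gen X H"
  using assms(2)
proof (induction rule: ideal_gen.induct)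
  case (gen g) then show ?case by (rule assms(1))
next
  case zero then show ?case by (simp add: phi_mzero ideal_gen.zero)
next
  case (add a b) then show ?case by (simp add: phi_madd ideal_gen.add)
next
  case (smult a c) then show ?case by (simp add: phi_msc ideal_gen.smult)
next
  case (mulr a m) then show ?case by (simp add: phi_mmul ideal_gen.mulr Melt_phi)
next
  case (mull a m) then show ?case by (simp add: phi_mmul ideal_gen.mull Melt_phi)
qed

lemma phi_T:
  assumes pl: "\<forall>\<Phi>\<in>Ids. polylinear \<Phi>" and a: "a \<in> Tideal X Ids"
  shows "phi a \<in> Tideal X Ids"
  using a unfolding Tideal_def
proof (rule phi_ideal[rotated])
  fix g assume "g \<in> {eval_poly \<Phi> u |\<Phi> u. \<Phi> \<in> Ids \<and> (\<forall>i. Melt X (u i))}"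
  then obtain \<Phi> u where g: "g = eval_poly \<Phi> u" "\<Phi> \<in> Ids" "\<forall>i. Melt X (u i)" by blast
  have fin: "finite {t. \<Phi> t \<noteq> 0}" using pl g(2) by (simp add: polylinear_def)
  have "phi g = eval_poly \<Phi> (\<lambda>i. phi (u i))" using g(1) phi_eval_poly[OF fin] by simp
  moreover have "\<forall>i. Melt X (phi (u i))" using g(3) Melt_phi by blast
  ultimately show "phi g \<in> ideal_gen X {eval_poly \<Phi> u |\<Phi> u. \<Phi> \<in> Ids \<and> (\<forall>i. Melt X (u i))}"
    using g(2) by (auto intro!: ideal_gen.gen)
qed

lemma main_generic:
  fixes X :: "'x set" and Ids :: "(nat btree \<Rightarrow> 'k::field) set"
  assumes good: "goodP P ops" and pl: "\<forall>\<Phi>\<in>Ids. polylinear \<Phi>" and S: "S \<subseteq> SpanP X P"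
  shows "(\<forall>m\<in>ideal_gen X (Tideal X Ids \<union> S \<union> phi ` S). phi m \<in> ideal_gen X (Tideal X Ids \<union> S \<union> phi ` S))
    \<and> quot_iso (SpanP X P) (relideal_gen (SpanP X P) (S \<union> (SpanP X P \<inter> Tideal X Ids)) ops) ops
        (subalg_gen (dotgens X) ops) (subalg_gen (dotgens X) ops \<inter> ideal_gen X (Tideal X Ids \<union> S \<union> phi ` S)) ops"
proof -
  let ?T = "Tideal X Ids"
  let ?I = "ideal_gen X (?T \<union> S \<union> phi ` S)"
  let ?G = "S \<union> (SpanP X P \<inter> ?T)"
  let ?J = "relideal_gen (SpanP X P) ?G ops"
  have A: "subalg_gen (dotgens X) ops = SpanP X P" by (rule A_eq[OF good])
  have GS: "?G \<subseteq> SpanP X P" using S by blast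
  have TI: "a \<in> ?I" if "a \<in> ?T" for a using that by (blast intro: ideal_gen.gen)
  have phiI: "phi m \<in> ?I" if "m \<in> ?I" for m
  proof (rule phi_ideal[OF _ that])
    fix g assume "g \<in> ?T \<union> S \<union> phi ` S"
    then consider "g \<in> ?T" | "g \<in> S" | "g \<in> phi ` S" by blast
    then show "phi g \<in> ?I"
    proof cases
      case 1 then show ?thesis using phi_T[OF pl] TI by blast
    next
      case 2 then show ?thesis by (blast intro: ideal_gen.gen)
    next
      case 3 then show ?thesis using phi_phi by (metis UnI2 image_iff ideal_gen.gen)
    qed
  qed
  have JI: "a \<in> ?I" if "a \<in> ?J" for a
    using that
  proof (induction rule: relideal_gen.induct)
    case (gen g) then show ?case using TI by (blast intro: ideal_gen.gen)
  next
    case zero then show ?case by (rule ideal_gen.zero)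
  next
    case (add a b) then show ?case by (blast intro: ideal_gen.add)
  next
    case (smult a c) then show ?case by (blast intro: ideal_gen.smult)
  next
    case (opr p a w)
    have wM: "Melt X w" using opr.hyps(3) by (rule SpanP_Melt)
    have h: "\<forall>p\<in>set ops. p = opL \<or> p = opR \<or> (p = mmul \<and> (\<forall>x y. P x \<longrightarrow> P y \<longrightarrow> P (x + y)))"
      using good unfolding goodP_def by (elim conjE)
    then have "p = opL \<or> p = opR \<or> p = mmul" using opr.hyps(1) by blast
    then show ?case
    proof (elim disjE)
      assume "p = opL" then show ?thesis using phiI[OF opr.IH] wM by (simp add: opL_def ideal_gen.mulr)
    next
      assume "p = opR" then show ?thesis using opr.IH wM by (simp add: opR_def ideal_gen.mulr Melt_phi)
    next
      assume "p = mmul" then show ?thesis using opr.IH wM by (simp add: ideal_gen.mulr)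
    qed
  next
    case (opl p a w)
    have wM: "Melt X w" using opl.hyps(3) by (rule SpanP_Melt)
    have h: "\<forall>p\<in>set ops. p = opL \<or> p = opR \<or> (p = mmul \<and> (\<forall>x y. P x \<longrightarrow> P y \<longrightarrow> P (x + y)))"
      using good unfolding goodP_def by (elim conjE)
    then have "p = opL \<or> p = opR \<or> p = mmul" using opl.hyps(1) by blast
    then show ?case
    proof (elim disjE)
      assume "p = opL" then show ?thesis using opl.IH wM by (simp add: opL_def ideal_gen.mull Melt_phi)
    next
      assume "p = opR" then show ?thesis using phiI[OF opl.IH] wM by (simp add: opR_def ideal_gen.mull)
    next
      assume "p = mmul" then show ?thesis using opl.IH wM by (simp add: ideal_gen.mull)
    qed
  qed
  have JS: "a \<in> SpanP X P" if "a \<in> ?J" for a using J_Span[OF good GS that] .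
  have InvI: "Inv P ?J a" if "a \<in> ?I" for a
  proof (rule Inv_ideal[OF good GS _ that])
    fix g assume "g \<in> ?T \<union> S \<union> phi ` S"
    then consider "g \<in> ?T" | "g \<in> S" | "g \<in> phi ` S" by blast
    then show "Inv P ?J g"
    proof cases
      case 1
      have g1: "g \<in> ideal_gen X {eval_poly \<Phi> u |\<Phi> u. \<Phi> \<in> Ids \<and> (\<forall>i. Melt X (u i))}"
        using 1 unfolding Tideal_def .
      show ?thesis
      proof (rule Inv_ideal[OF good GS _ g1])
        fix h assume "h \<in> {eval_poly \<Phi> u |\<Phi> u. \<Phi> \<in> Ids \<and> (\<forall>i. Melt X (u i))}"
        then obtain \<Phi> u where hh: "h = eval_poly \<Phi> u" "\<Phi> \<in> Ids" "\<forall>i. Melt X (u i)" by blast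
        have "Inv P ?J (eval_poly \<Phi> u)"
        proof (rule Inv_Tgen[OF good GS, where Tset = ?T])
          show "x \<in> ?J" if "x \<in> SpanP X P" "x \<in> ?T" for x
            using that by (blast intro: relideal_gen.gen)
          show "eval_poly \<Phi> v \<in> ?T" if "\<forall>i. Melt X (v i)" for v
            unfolding Tideal_def using that hh(2) by (blast intro: ideal_gen.gen)
          show "polylinear \<Phi>" using pl hh(2) by blast
          show "\<forall>i. Melt X (u i)" by (rule hh(3))
        qed
        then show "Inv P ?J h" using hh(1) by simp
      qed
    next
      case 2 then show ?thesis using Inv_G[OF good GS] by blast
    next
      case 3 then show ?thesis using Inv_phiG[OF good GS] by blast
    qed
  qed
  have key: "a \<in> ?J \<longleftrightarrow> a \<in> subalg_gen (dotgens X) ops \<inter> ?I" if "a \<in> SpanP X P" for a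
  proof
    assume "a \<in> ?J" then show "a \<in> subalg_gen (dotgens X) ops \<inter> ?I" using JI JS A by blast
  next
    assume "a \<in> subalg_gen (dotgens X) ops \<inter> ?I"
    then have "Inv P ?J a" using InvI by blast
    then have "projP P a \<in> ?J" by (simp add: Inv_def)
    then show "a \<in> ?J" using projP_id[OF that] by simp
  qed
  have z: "mzero \<in> subalg_gen (dotgens X) ops \<inter> ?I" by (blast intro: subalg_gen.zero ideal_gen.zero)
  have qi: "quot_iso (SpanP X P) ?J ops (subalg_gen (dotgens X) ops) (subalg_gen (dotgens X) ops \<inter> ?I) ops"
    unfolding quot_iso_def
  proof (intro conjI exI[of _ "\<lambda>a. a"])
    show "\<forall>a\<in>SpanP X P. a \<in> subalg_gen (dotgens X) ops" using A by blast
    show "\<forall>a\<in>SpanP X P. \<forall>b\<in>SpanP X P. msub (madd a b) (madd a b) \<in> subalg_gen (dotgens X) ops \<inter> ?I"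
      using z by (simp add: msub_self)
    show "\<forall>c. \<forall>a\<in>SpanP X P. msub (msc c a) (msc c a) \<in> subalg_gen (dotgens X) ops \<inter> ?I"
      using z by (simp add: msub_self)
    show "\<forall>i<length ops. \<forall>a\<in>SpanP X P. \<forall>b\<in>SpanP X P.
        msub ((ops ! i) a b) ((ops ! i) a b) \<in> subalg_gen (dotgens X) ops \<inter> ?I"
      using z by (simp add: msub_self)
    show "\<forall>a\<in>SpanP X P. (a \<in> subalg_gen (dotgens X) ops \<inter> ?I) = (a \<in> ?J)" using key by blast
    show "\<forall>w\<in>subalg_gen (dotgens X) ops. \<exists>a\<in>SpanP X P. msub w a \<in> subalg_gen (dotgens X) ops \<inter> ?I"
    proof
      fix w assume w: "w \<in> subalg_gen (dotgens X) ops"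
      show "\<exists>a\<in>SpanP X P. msub w a \<in> subalg_gen (dotgens X) ops \<inter> ?I"
        by (rule bexI[of _ w]) (use z A w in \<open>simp_all add: msub_self\<close>)
    qed
  qed simp
  show ?thesis using phiI qi by blast
qed

theorem corollary4p3:
  fixes X :: "'x set" and Ids :: "(nat btree \<Rightarrow> 'k::field) set"
  assumes "\<forall>\<Phi>\<in>Ids. polylinear \<Phi>"
  shows
    "(\<forall>S. S \<subseteq> VM X \<longrightarrow>
        (let T = Tideal X Ids;
             I = ideal_gen X (T \<union> S \<union> phi ` S);
             A = subalg_gen (dotgens X) tri_ops;
             J = relideal_gen (VM X) (S \<union> (VM X \<inter> T)) tri_ops
         in (\<forall>m\<in>I. phi m \<in> I) \<and> quot_iso (VM X) J tri_ops A (A \<inter> I) tri_ops))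
   \<and> (\<forall>S. S \<subseteq> V2M X \<longrightarrow>
        (let T = Tideal X Ids;
             I = ideal_gen X (T \<union> S \<union> phi ` S);
             A = subalg_gen (dotgens X) di_ops;
             J = relideal_gen (V2M X) (S \<union> (V2M X \<inter> T)) di_ops
         in (\<forall>m\<in>I. phi m \<in> I) \<and> quot_iso (V2M X) J di_ops A (A \<inter> I) di_ops))"
proof (intro conjI allI impI)
  fix S :: "(('x+'x) btree \<Rightarrow> 'k) set"
  assume "S \<subseteq> VM X"
  then have "S \<subseteq> SpanP X (\<lambda>d. 1 \<le> d)" by (simp add: VM_eq)
  from main_generic[OF good_tri assms this]
  show "let T = Tideal X Ids;
             I = ideal_gen X (T \<union> S \<union> phi ` S);
             A = subalg_gen (dotgens X) tri_ops;
             J = relideal_gen (VM X) (S \<union> (VM X \<inter> T)) tri_ops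
         in (\<forall>m\<in>I. phi m \<in> I) \<and> quot_iso (VM X) J tri_ops A (A \<inter> I) tri_ops"
    by (simp add: VM_eq Let_def)
next
  fix S :: "(('x+'x) btree \<Rightarrow> 'k) set"
  assume "S \<subseteq> V2M X"
  then have "S \<subseteq> SpanP X (\<lambda>d. d = 1)" by (simp add: V2M_eq)
  from main_generic[OF good_di assms this]
  show "let T = Tideal X Ids;
             I = ideal_gen X (T \<union> S \<union> phi ` S);
             A = subalg_gen (dotgens X) di_ops;
             J = relideal_gen (V2M X) (S \<union> (V2M X \<inter> T)) di_ops
         in (\<forall>m\<in>I. phi m \<in> I) \<and> quot_iso (V2M X) J di_ops A (A \<inter> I) di_ops"
    by (simp add: V2M_eq Let_def)
qed

end
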